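(* Let $\Gamma\triangleright W$ be a well-formed CCCP configuration, $c$ a channel and $v$ a closed value, and let $\mathit{eureka},\mathit{fail}$ be channels that do not occur free in $W$ and are idle in $\Gamma$; let $\mathit{arb},\mathit{no}$ be closed values with $\delta_{\mathit{arb}}=\delta_{\mathit{no}}=1$, and let $d$ be a channel distinct from $c,\mathit{eureka},\mathit{fail}$. Define $T_{\gamma(c,v)}=\nu d{:}(0,\cdot).\big(\lfloor ?c(x).(([x=v]\,d!\langle\mathit{arb}\rangle.\mathbf 0,\ \mathbf 0)+\mathit{fail}!\langle\mathit{no}\rangle.\mathbf 0)\rfloor\ \big|\ \sigma^2.([\mathrm{exp}(d)]\,\mathit{eureka}!\langle\mathit{arb}\rangle.\mathbf 0,\ \mathbf 0)\big)$ and $T^{\checkmark}_{\gamma(c,v)}=\nu d{:}(0,\cdot).\big(\sigma.d!\langle\mathit{arb}\rangle.\mathbf 0\ \big|\ \sigma.([\mathrm{exp}(d)]\,\mathit{eureka}!\langle\mathit{arb}\rangle.\mathbf 0,\ \mathbf 0)\big)$, where $\nu d{:}(0,\cdot)$ means $d$ is restricted with exposure time $0$ (idle; the value component is irrelevant). Then $\Gamma\triangleright W\overset{\gamma(c,v)}{\Rightarrow}\Gamma'\triangleright W'$ if and only if $\Gamma\triangleright W|T_{\gamma(c,v)}\to_i^*\to_\sigma\to_i^*\Gamma'\triangleright W'|T^{\checkmark}_{\gamma(c,v)}$.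
   Context: CCCP syntax. Fix a set of channels (ranged over by $c,d$) and a set of values containing data variables $x,y$ and a special error value $\mathtt{err}$; closed values $v,w$ contain no variables, and each closed value $v$ has a transmission time $\delta_v\in\mathbb{N}$ with $\delta_v\ge 1$. Expressions $e$ are built from values; closed expressions evaluate to closed values via $[\![e]\!]$. Station code (processes) is given by $P,Q ::= c!\langle e\rangle.P \mid \lfloor ?c(x).P\rfloor Q \mid \sigma.P \mid \tau.P \mid P+Q \mid [b]P,Q \mid X \mid \mathbf{0} \mid \mathrm{fix}\,X.P$, where $b$ is either $e_1=e_2$ or $\mathrm{exp}(c)$, $[b]P,Q$ is a conditional (then-branch $P$, else-branch $Q$), $\lfloor ?c(x).P\rfloor Q$ is a receiver on $c$ with timeout branch $Q$ ($x$ bound in $P$), $\sigma.P$ is a one-unit delay and $\sigma^n.P$ denotes $n$ nested delays. System terms are $W ::= P \mid \lfloor ?c(x).P\rfloor \mid W_1|W_2 \mid \nu c{:}(n,v).W$, where $\lfloor ?c(x).P\rfloor$ is an active receiver ($x$ bound in $P$) and $\nu c{:}(n,v).W$ restricts $c$ with local channel state $(n,v)$. In $\mathrm{fix}\,X.P$ every occurrence of $X$ in $P$ is guarded, i.e. lies within a broadcast prefix, a receiver continuation, a timeout branch, a $\sigma$-prefix, or a branch of a conditional. Terms are identified up to $\alpha$-conversion. A channel environment is a map $\Gamma$ from channels to $\mathbb{N}\times$(closed values); write $\Gamma\vdash_t c:n$ and $\Gamma\vdash_v c:w$ when $\Gamma(c)=(n,w)$; $c$ is idle in $\Gamma$ if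 $\Gamma\vdash_t c:0$ and exposed otherwise; $\Gamma[c\mapsto(n,v)]$ is $\Gamma$ updated at $c$; $\Gamma\le\Gamma'$ iff for every $c$, $\Gamma\vdash_t c:n$ and $\Gamma'\vdash_t c:m$ imply $n\le m$. A configuration $\Gamma\triangleright W$ is a channel environment together with a closed system term (no free data or process variables). Intensional semantics. Actions $\lambda$ are $c!v$, $c?v$, $\sigma$, $\tau$. The environment update $\lambda(\Gamma)$ is: $\sigma(\Gamma)(c)=(\max(n-1,0),w)$ whenever $\Gamma(c)=(n,w)$; $c!v(\Gamma)$ agrees with $\Gamma$ except at $c$, where it is $(\delta_v,v)$ if $c$ is idle in $\Gamma$ and $(\max(\delta_v,n),\mathtt{err})$ if $\Gamma\vdash_t c:n>0$; $c?v(\Gamma)=c!v(\Gamma)$; $\tau(\Gamma)=\Gamma$. The predicate $\mathrm{rcv}(W,c)$ on terms is: true for $\lfloor ?d(x).P\rfloor Q$ iff $d=c$; $\mathrm{rcv}(P+Q,c)=\mathrm{rcv}(P,c)\vee\mathrm{rcv}(Q,c)$; $\mathrm{rcv}(\mathrm{fix}\,X.P,c)=\mathrm{rcv}(P,c)$; $\mathrm{rcv}(W_1|W_2,c)=\mathrm{rcv}(W_1,c)\vee\mathrm{rcv}(W_2,c)$; $\mathrm{rcv}(\nu d{:}(n,v).W,c)=\mathrm{rcv}(W,c)$ (with $d\neq c$ by $\alpha$-conversion); false for all other forms (broadcasts, $\tau.P$, $\sigma.P$, conditionals, $X$, $\mathbf 0$, active receivers). Then $\mathrm{rcv}(\Gamma\triangleright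 W,c)$ holds iff $c$ is idle in $\Gamma$ and $\mathrm{rcv}(W,c)$. Transitions $\Gamma\triangleright W\xrightarrow{\lambda}W'$ are the least relation closed under: (Snd) $[\![e]\!]=v$ implies $\Gamma\triangleright c!\langle e\rangle.P\xrightarrow{c!v}\sigma^{\delta_v}.P$; (Rcv) $c$ idle in $\Gamma$ implies $\Gamma\triangleright\lfloor ?c(x).P\rfloor Q\xrightarrow{c?v}\lfloor ?c(x).P\rfloor$; (RcvIgn) $\neg\mathrm{rcv}(\Gamma\triangleright W,c)$ implies $\Gamma\triangleright W\xrightarrow{c?v}W$; (Sync) $\Gamma\triangleright W_1\xrightarrow{c!v}W_1'$ and $\Gamma\triangleright W_2\xrightarrow{c?v}W_2'$ imply $\Gamma\triangleright W_1|W_2\xrightarrow{c!v}W_1'|W_2'$, and symmetrically; (RcvPar) $\Gamma\triangleright W_i\xrightarrow{c?v}W_i'$ for $i=1,2$ imply $\Gamma\triangleright W_1|W_2\xrightarrow{c?v}W_1'|W_2'$; (TimeNil) $\Gamma\triangleright\mathbf 0\xrightarrow{\sigma}\mathbf 0$; (Sleep) $\Gamma\triangleright\sigma.P\xrightarrow{\sigma}P$; (ActRcv) $\Gamma\vdash_t c:n$, $n>1$ imply $\Gamma\triangleright\lfloor ?c(x).P\rfloor\xrightarrow{\sigma}\lfloor ?c(x).P\rfloor$; (EndRcv) $\Gamma\vdash_t c:1$, $\Gamma\vdash_v c:w$ imply $\Gamma\triangleright\lfloor ?c(x).P\rfloor\xrightarrow{\sigma}\{w/x\}P$; (Timeout)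 $c$ idle in $\Gamma$ implies $\Gamma\triangleright\lfloor ?c(x).P\rfloor Q\xrightarrow{\sigma}Q$; (RcvLate) $c$ exposed in $\Gamma$ implies $\Gamma\triangleright\lfloor ?c(x).P\rfloor Q\xrightarrow{\tau}\lfloor ?c(x).\{\mathtt{err}/x\}P\rfloor$; (Tau) $\Gamma\triangleright\tau.P\xrightarrow{\tau}P$; (Then)/(Else) $\Gamma\triangleright[b]P,Q\xrightarrow{\tau}\sigma.P$ if $[\![b]\!]_\Gamma$ is true and $\xrightarrow{\tau}\sigma.Q$ otherwise, where $[\![e_1=e_2]\!]_\Gamma$ is true iff $[\![e_1]\!]=[\![e_2]\!]$ and $[\![\mathrm{exp}(c)]\!]_\Gamma$ is true iff $c$ is exposed in $\Gamma$; (TimePar) $\Gamma\triangleright W_i\xrightarrow{\sigma}W_i'$ for $i=1,2$ imply $\Gamma\triangleright W_1|W_2\xrightarrow{\sigma}W_1'|W_2'$; (TauPar) $\Gamma\triangleright W_1\xrightarrow{\tau}W_1'$ implies $\Gamma\triangleright W_1|W_2\xrightarrow{\tau}W_1'|W_2$, and symmetrically; (Rec) $\Gamma\triangleright\{\mathrm{fix}\,X.P/X\}P\xrightarrow{\lambda}W$ implies $\Gamma\triangleright\mathrm{fix}\,X.P\xrightarrow{\lambda}W$; (Sum) for $\lambda\in\{\tau,c!v\}$, $\Gamma\triangleright P\xrightarrow{\lambda}W$ implies $\Gamma\triangleright P+Q\xrightarrow{\lambda}W$, and symmetrically; (SumTime) $\Gamma\triangleright P\xrightarrow{\sigma}P'$,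 $\Gamma\triangleright Q\xrightarrow{\sigma}Q'$ imply $\Gamma\triangleright P+Q\xrightarrow{\sigma}P'+Q'$; (SumRcv) $\Gamma\triangleright P\xrightarrow{c?v}W$ and $\mathrm{rcv}(\Gamma\triangleright P,c)$ imply $\Gamma\triangleright P+Q\xrightarrow{c?v}W$, and symmetrically; (ResI) $\Gamma[c\mapsto(n,v)]\triangleright W\xrightarrow{c!w}W'$ implies $\Gamma\triangleright\nu c{:}(n,v).W\xrightarrow{\tau}\nu c{:}(c!w(\Gamma[c\mapsto(n,v)]))(c).W'$; (ResV) $\Gamma[c\mapsto(n,v)]\triangleright W\xrightarrow{\lambda}W'$ with $c$ not occurring in $\lambda$ implies $\Gamma\triangleright\nu c{:}(n,v).W\xrightarrow{\lambda}\nu c{:}(\lambda(\Gamma[c\mapsto(n,v)]))(c).W'$. Reductions. $\Gamma\triangleright W\to\Gamma'\triangleright W'$ iff $\Gamma\triangleright W\xrightarrow{\lambda}W'$ for some $\lambda\in\{c!v,\sigma,\tau\}$ and $\Gamma'=\lambda(\Gamma)$; it is instantaneous ($\to_i$) if $\lambda\neq\sigma$ and timed ($\to_\sigma$) if $\lambda=\sigma$. Extensional semantics. Extensional actions $\alpha\in\{c?v,\sigma,\tau,\gamma(c,v),\iota(c)\}$ between configurations are given by: (Input) $\Gamma\triangleright W\xrightarrow{c?v}W'$ implies $\Gamma\triangleright W\overset{c?v}{\rightarrowtail}c?v(\Gamma)\triangleright W'$; (Time) $\Gamma\triangleright W\xrightarrow{\sigma}W'$ implies $\Gamma\triangleright W\overset{\sigma}{\rightarrowtail}\sigma(\Gamma)\triangleright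 W'$; (Shh) $\Gamma\triangleright W\xrightarrow{c!v}W'$ implies $\Gamma\triangleright W\overset{\tau}{\rightarrowtail}c!v(\Gamma)\triangleright W'$; (TauExt) $\Gamma\triangleright W\xrightarrow{\tau}W'$ implies $\Gamma\triangleright W\overset{\tau}{\rightarrowtail}\Gamma\triangleright W'$; (Deliver) $\Gamma(c)=(1,v)$ and $\Gamma\triangleright W\xrightarrow{\sigma}W'$ imply $\Gamma\triangleright W\overset{\gamma(c,v)}{\rightarrowtail}\sigma(\Gamma)\triangleright W'$; (Idle) $c$ idle in $\Gamma$ implies $\Gamma\triangleright W\overset{\iota(c)}{\rightarrowtail}\Gamma\triangleright W$. Weak actions: $\Rightarrow$ is the reflexive-transitive closure of $\overset{\tau}{\rightarrowtail}$; $\overset{\alpha}{\Rightarrow}$ is $\Rightarrow\overset{\alpha}{\rightarrowtail}\Rightarrow$. Well-formedness. The set of well-formed configurations is the least set such that: $\Gamma\triangleright P$ is well-formed for every closed process $P$; $\Gamma\triangleright\lfloor ?c(x).P\rfloor$ is well-formed whenever $c$ is exposed in $\Gamma$; $\Gamma\triangleright W_1|W_2$ is well-formed whenever $\Gamma\triangleright W_1$ and $\Gamma\triangleright W_2$ are; $\Gamma\triangleright\nu c{:}(n,v).W$ is well-formed whenever $\Gamma[c\mapsto(n,v)]\triangleright W$ is. *)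

theory Defs
  imports Main "HOL-Library.Infinite_Typeclass"
begin

section \<open>CCCP syntax\<close>

text \<open>Closed values have type 'a; data variables and process variables are natural numbers;
  expressions are first-order terms over values, data variables and operator symbols 'f,
  interpreted by a function I.\<close>

datatype ('a,'f) exp = EVal 'a | EVar nat | EApp 'f "('a,'f) exp list"

datatype ('ch,'a,'f) bexp = BEq "('a,'f) exp" "('a,'f) exp" | BExp 'ch

datatype ('ch,'a,'f) proc =
    PSnd 'ch "('a,'f) exp" "('ch,'a,'f) proc"
  | PRcv 'ch nat "('ch,'a,'f) proc" "('ch,'a,'f) proc"            (* |_?c(x).P_| Q *)
  | PSig "('ch,'a,'f) proc"
  | PTau "('ch,'a,'f) proc"
  | PSum "('ch,'a,'f) proc" "('ch,'a,'f) proc"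
  | PCond "('ch,'a,'f) bexp" "('ch,'a,'f) proc" "('ch,'a,'f) proc" (* [b]P,Q *)
  | PVar nat
  | PNil
  | PFix nat "('ch,'a,'f) proc"

datatype ('ch,'a,'f) sys =
    SProc "('ch,'a,'f) proc"
  | SRcv 'ch nat "('ch,'a,'f) proc"                                (* active receiver *)
  | SPar "('ch,'a,'f) sys" "('ch,'a,'f) sys"
  | SNu 'ch "nat \<times> 'a" "('ch,'a,'f) sys"                        (* nu c:(n,v).W *)

abbreviation sigmas :: "nat \<Rightarrow> ('ch,'a,'f) proc \<Rightarrow> ('ch,'a,'f) proc" where
  "sigmas n P \<equiv> (PSig ^^ n) P"

primrec fv_e :: "('a,'f) exp \<Rightarrow> nat set" where
  "fv_e (EVal v) = {}"
| "fv_e (EVar x) = {x}"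
| "fv_e (EApp f es) = \<Union> (set (map fv_e es))"

fun fv_b :: "('ch,'a,'f) bexp \<Rightarrow> nat set" where
  "fv_b (BEq e1 e2) = fv_e e1 \<union> fv_e e2"
| "fv_b (BExp c) = {}"

primrec fdv_p :: "('ch,'a,'f) proc \<Rightarrow> nat set" where
  "fdv_p (PSnd c e P) = fv_e e \<union> fdv_p P"
| "fdv_p (PRcv c x P Q) = (fdv_p P - {x}) \<union> fdv_p Q"
| "fdv_p (PSig P) = fdv_p P"
| "fdv_p (PTau P) = fdv_p P"
| "fdv_p (PSum P Q) = fdv_p P \<union> fdv_p Q"
| "fdv_p (PCond b P Q) = fv_b b \<union> fdv_p P \<union> fdv_p Q"
| "fdv_p (PVar X) = {}"
| "fdv_p PNil = {}"
| "fdv_p (PFix X P) = fdv_p P"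

primrec fpv_p :: "('ch,'a,'f) proc \<Rightarrow> nat set" where
  "fpv_p (PSnd c e P) = fpv_p P"
| "fpv_p (PRcv c x P Q) = fpv_p P \<union> fpv_p Q"
| "fpv_p (PSig P) = fpv_p P"
| "fpv_p (PTau P) = fpv_p P"
| "fpv_p (PSum P Q) = fpv_p P \<union> fpv_p Q"
| "fpv_p (PCond b P Q) = fpv_p P \<union> fpv_p Q"
| "fpv_p (PVar X) = {X}"
| "fpv_p PNil = {}"
| "fpv_p (PFix X P) = fpv_p P - {X}"

primrec fdv_s :: "('ch,'a,'f) sys \<Rightarrow> nat set" where
  "fdv_s (SProc P) = fdv_p P"
| "fdv_s (SRcv c x P) = fdv_p P - {x}"
| "fdv_s (SPar W1 W2) = fdv_s W1 \<union> fdv_s W2"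
| "fdv_s (SNu c s W) = fdv_s W"

primrec fpv_s :: "('ch,'a,'f) sys \<Rightarrow> nat set" where
  "fpv_s (SProc P) = fpv_p P"
| "fpv_s (SRcv c x P) = fpv_p P"
| "fpv_s (SPar W1 W2) = fpv_s W1 \<union> fpv_s W2"
| "fpv_s (SNu c s W) = fpv_s W"

definition closed_sys :: "('ch,'a,'f) sys \<Rightarrow> bool" where
  "closed_sys W \<longleftrightarrow> fdv_s W = {} \<and> fpv_s W = {}"

primrec guarded :: "nat \<Rightarrow> ('ch,'a,'f) proc \<Rightarrow> bool" where
  "guarded X (PSnd c e P) = True"
| "guarded X (PRcv c x P Q) = True"
| "guarded X (PSig P) = True"
| "guarded X (PTau P) = guarded X P"
| "guarded X (PSum P Q) = (guarded X P \<and> guarded X Q)"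
| "guarded X (PCond b P Q) = True"
| "guarded X (PVar Y) = (Y \<noteq> X)"
| "guarded X PNil = True"
| "guarded X (PFix Y P) = (Y = X \<or> guarded X P)"

primrec guarded_p :: "('ch,'a,'f) proc \<Rightarrow> bool" where
  "guarded_p (PSnd c e P) = guarded_p P"
| "guarded_p (PRcv c x P Q) = (guarded_p P \<and> guarded_p Q)"
| "guarded_p (PSig P) = guarded_p P"
| "guarded_p (PTau P) = guarded_p P"
| "guarded_p (PSum P Q) = (guarded_p P \<and> guarded_p Q)"
| "guarded_p (PCond b P Q) = (guarded_p P \<and> guarded_p Q)"
| "guarded_p (PVar X) = True"
| "guarded_p PNil = True"
| "guarded_p (PFix X P) = (guarded X P \<and> guarded_p P)"

primrec guarded_s :: "('ch,'a,'f) sys \<Rightarrow> bool" where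
  "guarded_s (SProc P) = guarded_p P"
| "guarded_s (SRcv c x P) = guarded_p P"
| "guarded_s (SPar W1 W2) = (guarded_s W1 \<and> guarded_s W2)"
| "guarded_s (SNu c s W) = guarded_s W"

section \<open>Channels: free channels, renaming, alpha-equivalence\<close>

fun chans_b :: "('ch,'a,'f) bexp \<Rightarrow> 'ch set" where
  "chans_b (BEq e1 e2) = {}"
| "chans_b (BExp c) = {c}"

primrec chans_p :: "('ch,'a,'f) proc \<Rightarrow> 'ch set" where
  "chans_p (PSnd c e P) = insert c (chans_p P)"
| "chans_p (PRcv c x P Q) = insert c (chans_p P \<union> chans_p Q)"
| "chans_p (PSig P) = chans_p P"
| "chans_p (PTau P) = chans_p P"
| "chans_p (PSum P Q) = chans_p P \<union> chans_p Q"
| "chans_p (PCond b P Q) = chans_b b \<union> chans_p P \<union> chans_p Q"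
| "chans_p (PVar X) = {}"
| "chans_p PNil = {}"
| "chans_p (PFix X P) = chans_p P"

text \<open>free channels of a system term (processes have no channel binders)\<close>
primrec fc :: "('ch,'a,'f) sys \<Rightarrow> 'ch set" where
  "fc (SProc P) = chans_p P"
| "fc (SRcv c x P) = insert c (chans_p P)"
| "fc (SPar W1 W2) = fc W1 \<union> fc W2"
| "fc (SNu c s W) = fc W - {c}"

fun ren_b :: "('ch \<Rightarrow> 'ch) \<Rightarrow> ('ch,'a,'f) bexp \<Rightarrow> ('ch,'a,'f) bexp" where
  "ren_b f (BEq e1 e2) = BEq e1 e2"
| "ren_b f (BExp c) = BExp (f c)"

primrec ren_p :: "('ch \<Rightarrow> 'ch) \<Rightarrow> ('ch,'a,'f) proc \<Rightarrow> ('ch,'a,'f) proc" where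
  "ren_p f (PSnd c e P) = PSnd (f c) e (ren_p f P)"
| "ren_p f (PRcv c x P Q) = PRcv (f c) x (ren_p f P) (ren_p f Q)"
| "ren_p f (PSig P) = PSig (ren_p f P)"
| "ren_p f (PTau P) = PTau (ren_p f P)"
| "ren_p f (PSum P Q) = PSum (ren_p f P) (ren_p f Q)"
| "ren_p f (PCond b P Q) = PCond (ren_b f b) (ren_p f P) (ren_p f Q)"
| "ren_p f (PVar X) = PVar X"
| "ren_p f PNil = PNil"
| "ren_p f (PFix X P) = PFix X (ren_p f P)"

text \<open>renaming of all channel occurrences (free and bound) by f; used with swaps\<close>
primrec ren_s :: "('ch \<Rightarrow> 'ch) \<Rightarrow> ('ch,'a,'f) sys \<Rightarrow> ('ch,'a,'f) sys" where
  "ren_s f (SProc P) = SProc (ren_p f P)"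
| "ren_s f (SRcv c x P) = SRcv (f c) x (ren_p f P)"
| "ren_s f (SPar W1 W2) = SPar (ren_s f W1) (ren_s f W2)"
| "ren_s f (SNu c s W) = SNu (f c) s (ren_s f W)"

definition swap :: "'ch \<Rightarrow> 'ch \<Rightarrow> 'ch \<Rightarrow> 'ch" where
  "swap a b x = (if x = a then b else if x = b then a else x)"

inductive alpha :: "('ch,'a,'f) sys \<Rightarrow> ('ch,'a,'f) sys \<Rightarrow> bool" where
  alpha_refl: "alpha W W"
| alpha_sym: "alpha W W' \<Longrightarrow> alpha W' W"
| alpha_trans: "alpha W1 W2 \<Longrightarrow> alpha W2 W3 \<Longrightarrow> alpha W1 W3"
| alpha_par: "alpha W1 W1' \<Longrightarrow> alpha W2 W2' \<Longrightarrow> alpha (SPar W1 W2) (SPar W1' W2')"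
| alpha_nu: "alpha W W' \<Longrightarrow> alpha (SNu c s W) (SNu c s W')"
| alpha_ren: "c' \<notin> fc W \<Longrightarrow> alpha (SNu c s W) (SNu c' s (ren_s (swap c c') W))"

section \<open>Substitution and evaluation\<close>

primrec subst_e :: "nat \<Rightarrow> 'a \<Rightarrow> ('a,'f) exp \<Rightarrow> ('a,'f) exp" where
  "subst_e x w (EVal v) = EVal v"
| "subst_e x w (EVar y) = (if y = x then EVal w else EVar y)"
| "subst_e x w (EApp f es) = EApp f (map (subst_e x w) es)"

fun subst_b :: "nat \<Rightarrow> 'a \<Rightarrow> ('ch,'a,'f) bexp \<Rightarrow> ('ch,'a,'f) bexp" where
  "subst_b x w (BEq e1 e2) = BEq (subst_e x w e1) (subst_e x w e2)"
| "subst_b x w (BExp c) = BExp c"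

text \<open>{w/x}P for a closed value w (no capture possible)\<close>
primrec dsubst :: "nat \<Rightarrow> 'a \<Rightarrow> ('ch,'a,'f) proc \<Rightarrow> ('ch,'a,'f) proc" where
  "dsubst x w (PSnd c e P) = PSnd c (subst_e x w e) (dsubst x w P)"
| "dsubst x w (PRcv c y P Q) = PRcv c y (if y = x then P else dsubst x w P) (dsubst x w Q)"
| "dsubst x w (PSig P) = PSig (dsubst x w P)"
| "dsubst x w (PTau P) = PTau (dsubst x w P)"
| "dsubst x w (PSum P Q) = PSum (dsubst x w P) (dsubst x w Q)"
| "dsubst x w (PCond b P Q) = PCond (subst_b x w b) (dsubst x w P) (dsubst x w Q)"
| "dsubst x w (PVar X) = PVar X"
| "dsubst x w PNil = PNil"
| "dsubst x w (PFix X P) = PFix X (dsubst x w P)"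

text \<open>{R/X}P (used with R = fix X.P, which is closed in closed configurations)\<close>
primrec psubst :: "nat \<Rightarrow> ('ch,'a,'f) proc \<Rightarrow> ('ch,'a,'f) proc \<Rightarrow> ('ch,'a,'f) proc" where
  "psubst X R (PSnd c e P) = PSnd c e (psubst X R P)"
| "psubst X R (PRcv c y P Q) = PRcv c y (psubst X R P) (psubst X R Q)"
| "psubst X R (PSig P) = PSig (psubst X R P)"
| "psubst X R (PTau P) = PTau (psubst X R P)"
| "psubst X R (PSum P Q) = PSum (psubst X R P) (psubst X R Q)"
| "psubst X R (PCond b P Q) = PCond b (psubst X R P) (psubst X R Q)"
| "psubst X R (PVar Y) = (if Y = X then R else PVar Y)"
| "psubst X R PNil = PNil"
| "psubst X R (PFix Y P) = (if Y = X then PFix Y P else PFix Y (psubst X R P))"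

primrec eval :: "('f \<Rightarrow> 'a list \<Rightarrow> 'a) \<Rightarrow> ('a,'f) exp \<Rightarrow> 'a option" where
  "eval I (EVal v) = Some v"
| "eval I (EVar x) = None"
| "eval I (EApp f es) = map_option (I f) (those (map (eval I) es))"

type_synonym ('ch,'a) env = "'ch \<Rightarrow> nat \<times> 'a"

definition idle :: "('ch,'a) env \<Rightarrow> 'ch \<Rightarrow> bool" where
  "idle \<Gamma> c \<longleftrightarrow> fst (\<Gamma> c) = 0"

definition exposed :: "('ch,'a) env \<Rightarrow> 'ch \<Rightarrow> bool" where
  "exposed \<Gamma> c \<longleftrightarrow> fst (\<Gamma> c) > 0"

fun beval :: "('f \<Rightarrow> 'a list \<Rightarrow> 'a) \<Rightarrow> ('ch,'a) env \<Rightarrow> ('ch,'a,'f) bexp \<Rightarrow> bool" where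
  "beval I \<Gamma> (BEq e1 e2) = (eval I e1 = eval I e2)"
| "beval I \<Gamma> (BExp c) = exposed \<Gamma> c"

datatype ('ch,'a) act = Out 'ch 'a | In 'ch 'a | Time | TauA

fun upd :: "('a \<Rightarrow> nat) \<Rightarrow> 'a \<Rightarrow> ('ch,'a) act \<Rightarrow> ('ch,'a) env \<Rightarrow> ('ch,'a) env" where
  "upd \<delta> err Time \<Gamma> = (\<lambda>c. (fst (\<Gamma> c) - 1, snd (\<Gamma> c)))"
| "upd \<delta> err (Out c v) \<Gamma> =
     \<Gamma>(c := (if fst (\<Gamma> c) = 0 then (\<delta> v, v) else (max (\<delta> v) (fst (\<Gamma> c)), err)))"
| "upd \<delta> err (In c v) \<Gamma> =
     \<Gamma>(c := (if fst (\<Gamma> c) = 0 then (\<delta> v, v) else (max (\<delta> v) (fst (\<Gamma> c)), err)))"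
| "upd \<delta> err TauA \<Gamma> = \<Gamma>"

fun act_chans :: "('ch,'a) act \<Rightarrow> 'ch set" where
  "act_chans (Out c v) = {c}"
| "act_chans (In c v) = {c}"
| "act_chans Time = {}"
| "act_chans TauA = {}"

fun out_or_tau :: "('ch,'a) act \<Rightarrow> bool" where
  "out_or_tau (Out c v) = True"
| "out_or_tau TauA = True"
| "out_or_tau _ = False"

primrec rcv_p :: "('ch,'a,'f) proc \<Rightarrow> 'ch \<Rightarrow> bool" where
  "rcv_p (PSnd d e P) c = False"
| "rcv_p (PRcv d x P Q) c = (d = c)"
| "rcv_p (PSig P) c = False"
| "rcv_p (PTau P) c = False"
| "rcv_p (PSum P Q) c = (rcv_p P c \<or> rcv_p Q c)"
| "rcv_p (PCond b P Q) c = False"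
| "rcv_p (PVar X) c = False"
| "rcv_p PNil c = False"
| "rcv_p (PFix X P) c = rcv_p P c"

text \<open>For restriction: if the bound name equals c it is alpha-renamed away, so the answer is False.\<close>
primrec rcv_s :: "('ch,'a,'f) sys \<Rightarrow> 'ch \<Rightarrow> bool" where
  "rcv_s (SProc P) c = rcv_p P c"
| "rcv_s (SRcv d x P) c = False"
| "rcv_s (SPar W1 W2) c = (rcv_s W1 c \<or> rcv_s W2 c)"
| "rcv_s (SNu d s W) c = (d \<noteq> c \<and> rcv_s W c)"

definition rcv_conf :: "('ch,'a) env \<Rightarrow> ('ch,'a,'f) sys \<Rightarrow> 'ch \<Rightarrow> bool" where
  "rcv_conf \<Gamma> W c \<longleftrightarrow> idle \<Gamma> c \<and> rcv_s W c"

section \<open>Intensional semantics\<close>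

inductive trans :: "('a \<Rightarrow> nat) \<Rightarrow> 'a \<Rightarrow> ('f \<Rightarrow> 'a list \<Rightarrow> 'a) \<Rightarrow>
    ('ch,'a) env \<Rightarrow> ('ch,'a,'f) sys \<Rightarrow> ('ch,'a) act \<Rightarrow> ('ch,'a,'f) sys \<Rightarrow> bool"
  for \<delta> :: "'a \<Rightarrow> nat" and err :: 'a and I :: "'f \<Rightarrow> 'a list \<Rightarrow> 'a" where
  Snd: "eval I e = Some v \<Longrightarrow>
     trans \<delta> err I \<Gamma> (SProc (PSnd c e P)) (Out c v) (SProc (sigmas (\<delta> v) P))"
| Rcv: "idle \<Gamma> c \<Longrightarrow> trans \<delta> err I \<Gamma> (SProc (PRcv c x P Q)) (In c v) (SRcv c x P)"
| RcvIgn: "\<not> rcv_conf \<Gamma> W c \<Longrightarrow> trans \<delta> err I \<Gamma> W (In c v) W"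
| Sync1: "trans \<delta> err I \<Gamma> W1 (Out c v) W1' \<Longrightarrow> trans \<delta> err I \<Gamma> W2 (In c v) W2' \<Longrightarrow>
     trans \<delta> err I \<Gamma> (SPar W1 W2) (Out c v) (SPar W1' W2')"
| Sync2: "trans \<delta> err I \<Gamma> W1 (In c v) W1' \<Longrightarrow> trans \<delta> err I \<Gamma> W2 (Out c v) W2' \<Longrightarrow>
     trans \<delta> err I \<Gamma> (SPar W1 W2) (Out c v) (SPar W1' W2')"
| RcvPar: "trans \<delta> err I \<Gamma> W1 (In c v) W1' \<Longrightarrow> trans \<delta> err I \<Gamma> W2 (In c v) W2' \<Longrightarrow>
     trans \<delta> err I \<Gamma> (SPar W1 W2) (In c v) (SPar W1' W2')"
| TimeNil: "trans \<delta> err I \<Gamma> (SProc PNil) Time (SProc PNil)"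
| Sleep: "trans \<delta> err I \<Gamma> (SProc (PSig P)) Time (SProc P)"
| ActRcv: "fst (\<Gamma> c) > 1 \<Longrightarrow> trans \<delta> err I \<Gamma> (SRcv c x P) Time (SRcv c x P)"
| EndRcv: "\<Gamma> c = (1, w) \<Longrightarrow> trans \<delta> err I \<Gamma> (SRcv c x P) Time (SProc (dsubst x w P))"
| Timeout: "idle \<Gamma> c \<Longrightarrow> trans \<delta> err I \<Gamma> (SProc (PRcv c x P Q)) Time (SProc Q)"
| RcvLate: "exposed \<Gamma> c \<Longrightarrow>
     trans \<delta> err I \<Gamma> (SProc (PRcv c x P Q)) TauA (SRcv c x (dsubst x err P))"
| Tau: "trans \<delta> err I \<Gamma> (SProc (PTau P)) TauA (SProc P)"
| Then: "beval I \<Gamma> b \<Longrightarrow> trans \<delta> err I \<Gamma> (SProc (PCond b P Q)) TauA (SProc (PSig P))"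
| Else: "\<not> beval I \<Gamma> b \<Longrightarrow> trans \<delta> err I \<Gamma> (SProc (PCond b P Q)) TauA (SProc (PSig Q))"
| TimePar: "trans \<delta> err I \<Gamma> W1 Time W1' \<Longrightarrow> trans \<delta> err I \<Gamma> W2 Time W2' \<Longrightarrow>
     trans \<delta> err I \<Gamma> (SPar W1 W2) Time (SPar W1' W2')"
| TauPar1: "trans \<delta> err I \<Gamma> W1 TauA W1' \<Longrightarrow> trans \<delta> err I \<Gamma> (SPar W1 W2) TauA (SPar W1' W2)"
| TauPar2: "trans \<delta> err I \<Gamma> W2 TauA W2' \<Longrightarrow> trans \<delta> err I \<Gamma> (SPar W1 W2) TauA (SPar W1 W2')"
| Rec: "trans \<delta> err I \<Gamma> (SProc (psubst X (PFix X P) P)) l W \<Longrightarrow>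
     trans \<delta> err I \<Gamma> (SProc (PFix X P)) l W"
| Sum1: "out_or_tau l \<Longrightarrow> trans \<delta> err I \<Gamma> (SProc P) l W \<Longrightarrow>
     trans \<delta> err I \<Gamma> (SProc (PSum P Q)) l W"
| Sum2: "out_or_tau l \<Longrightarrow> trans \<delta> err I \<Gamma> (SProc Q) l W \<Longrightarrow>
     trans \<delta> err I \<Gamma> (SProc (PSum P Q)) l W"
| SumTime: "trans \<delta> err I \<Gamma> (SProc P) Time (SProc P') \<Longrightarrow> trans \<delta> err I \<Gamma> (SProc Q) Time (SProc Q') \<Longrightarrow>
     trans \<delta> err I \<Gamma> (SProc (PSum P Q)) Time (SProc (PSum P' Q'))"
| SumRcv1: "trans \<delta> err I \<Gamma> (SProc P) (In c v) W \<Longrightarrow> rcv_conf \<Gamma> (SProc P) c \<Longrightarrow>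
     trans \<delta> err I \<Gamma> (SProc (PSum P Q)) (In c v) W"
| SumRcv2: "trans \<delta> err I \<Gamma> (SProc Q) (In c v) W \<Longrightarrow> rcv_conf \<Gamma> (SProc Q) c \<Longrightarrow>
     trans \<delta> err I \<Gamma> (SProc (PSum P Q)) (In c v) W"
| ResI: "trans \<delta> err I (\<Gamma>(c := s)) W (Out c w) W' \<Longrightarrow>
     trans \<delta> err I \<Gamma> (SNu c s W) TauA (SNu c (upd \<delta> err (Out c w) (\<Gamma>(c := s)) c) W')"
| ResV: "trans \<delta> err I (\<Gamma>(c := s)) W l W' \<Longrightarrow> c \<notin> act_chans l \<Longrightarrow>
     trans \<delta> err I \<Gamma> (SNu c s W) l (SNu c (upd \<delta> err l (\<Gamma>(c := s)) c) W')"
| Alpha: "alpha W W1 \<Longrightarrow> trans \<delta> err I \<Gamma> W1 l W1' \<Longrightarrow> alpha W1' W' \<Longrightarrow>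
     trans \<delta> err I \<Gamma> W l W'"

definition red_i :: "('a \<Rightarrow> nat) \<Rightarrow> 'a \<Rightarrow> ('f \<Rightarrow> 'a list \<Rightarrow> 'a) \<Rightarrow>
    ('ch,'a) env \<times> ('ch,'a,'f) sys \<Rightarrow> ('ch,'a) env \<times> ('ch,'a,'f) sys \<Rightarrow> bool" where
  "red_i \<delta> err I C C' \<longleftrightarrow> (\<exists>l. out_or_tau l \<and> trans \<delta> err I (fst C) (snd C) l (snd C')
                                  \<and> fst C' = upd \<delta> err l (fst C))"

definition red_sigma :: "('a \<Rightarrow> nat) \<Rightarrow> 'a \<Rightarrow> ('f \<Rightarrow> 'a list \<Rightarrow> 'a) \<Rightarrow>
    ('ch,'a) env \<times> ('ch,'a,'f) sys \<Rightarrow> ('ch,'a) env \<times> ('ch,'a,'f) sys \<Rightarrow> bool" where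
  "red_sigma \<delta> err I C C' \<longleftrightarrow> trans \<delta> err I (fst C) (snd C) Time (snd C')
                                  \<and> fst C' = upd \<delta> err Time (fst C)"

definition red_isi :: "('a \<Rightarrow> nat) \<Rightarrow> 'a \<Rightarrow> ('f \<Rightarrow> 'a list \<Rightarrow> 'a) \<Rightarrow>
    ('ch,'a) env \<times> ('ch,'a,'f) sys \<Rightarrow> ('ch,'a) env \<times> ('ch,'a,'f) sys \<Rightarrow> bool" where
  "red_isi \<delta> err I C C' \<longleftrightarrow>
     (\<exists>C1 C2. (red_i \<delta> err I)\<^sup>*\<^sup>* C C1 \<and> red_sigma \<delta> err I C1 C2 \<and> (red_i \<delta> err I)\<^sup>*\<^sup>* C2 C')"

section \<open>Extensional semantics\<close>

datatype ('ch,'a) eact = EIn 'ch 'a | ETime | ETau | EGamma 'ch 'a | EIota 'ch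

inductive ext :: "('a \<Rightarrow> nat) \<Rightarrow> 'a \<Rightarrow> ('f \<Rightarrow> 'a list \<Rightarrow> 'a) \<Rightarrow>
    ('ch,'a) env \<Rightarrow> ('ch,'a,'f) sys \<Rightarrow> ('ch,'a) eact \<Rightarrow> ('ch,'a) env \<Rightarrow> ('ch,'a,'f) sys \<Rightarrow> bool"
  for \<delta> :: "'a \<Rightarrow> nat" and err :: 'a and I :: "'f \<Rightarrow> 'a list \<Rightarrow> 'a" where
  Input: "trans \<delta> err I \<Gamma> W (In c v) W' \<Longrightarrow>
     ext \<delta> err I \<Gamma> W (EIn c v) (upd \<delta> err (In c v) \<Gamma>) W'"
| ETimeR: "trans \<delta> err I \<Gamma> W Time W' \<Longrightarrow> ext \<delta> err I \<Gamma> W ETime (upd \<delta> err Time \<Gamma>) W'"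
| Shh: "trans \<delta> err I \<Gamma> W (Out c v) W' \<Longrightarrow> ext \<delta> err I \<Gamma> W ETau (upd \<delta> err (Out c v) \<Gamma>) W'"
| TauExt: "trans \<delta> err I \<Gamma> W TauA W' \<Longrightarrow> ext \<delta> err I \<Gamma> W ETau \<Gamma> W'"
| Deliver: "\<Gamma> c = (1, v) \<Longrightarrow> trans \<delta> err I \<Gamma> W Time W' \<Longrightarrow>
     ext \<delta> err I \<Gamma> W (EGamma c v) (upd \<delta> err Time \<Gamma>) W'"
| Idle: "idle \<Gamma> c \<Longrightarrow> ext \<delta> err I \<Gamma> W (EIota c) \<Gamma> W"

definition ext_tau :: "('a \<Rightarrow> nat) \<Rightarrow> 'a \<Rightarrow> ('f \<Rightarrow> 'a list \<Rightarrow> 'a) \<Rightarrow>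
    ('ch,'a) env \<times> ('ch,'a,'f) sys \<Rightarrow> ('ch,'a) env \<times> ('ch,'a,'f) sys \<Rightarrow> bool" where
  "ext_tau \<delta> err I C C' \<longleftrightarrow> ext \<delta> err I (fst C) (snd C) ETau (fst C') (snd C')"

definition weak_ext :: "('a \<Rightarrow> nat) \<Rightarrow> 'a \<Rightarrow> ('f \<Rightarrow> 'a list \<Rightarrow> 'a) \<Rightarrow>
    ('ch,'a) env \<Rightarrow> ('ch,'a,'f) sys \<Rightarrow> ('ch,'a) eact \<Rightarrow> ('ch,'a) env \<Rightarrow> ('ch,'a,'f) sys \<Rightarrow> bool" where
  "weak_ext \<delta> err I \<Gamma> W a \<Gamma>' W' \<longleftrightarrow>
     (\<exists>\<Gamma>1 W1 \<Gamma>2 W2. (ext_tau \<delta> err I)\<^sup>*\<^sup>* (\<Gamma>, W) (\<Gamma>1, W1) \<and> ext \<delta> err I \<Gamma>1 W1 a \<Gamma>2 W2 \<and>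
        (ext_tau \<delta> err I)\<^sup>*\<^sup>* (\<Gamma>2, W2) (\<Gamma>', W'))"

inductive wf_conf :: "('ch,'a) env \<Rightarrow> ('ch,'a,'f) sys \<Rightarrow> bool" where
  wf_proc: "fdv_p P = {} \<Longrightarrow> fpv_p P = {} \<Longrightarrow> wf_conf \<Gamma> (SProc P)"
| wf_rcv: "exposed \<Gamma> c \<Longrightarrow> wf_conf \<Gamma> (SRcv c x P)"
| wf_par: "wf_conf \<Gamma> W1 \<Longrightarrow> wf_conf \<Gamma> W2 \<Longrightarrow> wf_conf \<Gamma> (SPar W1 W2)"
| wf_nu: "wf_conf (\<Gamma>(c := s)) W \<Longrightarrow> wf_conf \<Gamma> (SNu c s W)"

definition T_gamma :: "'ch \<Rightarrow> 'a \<Rightarrow> 'ch \<Rightarrow> 'ch \<Rightarrow> 'ch \<Rightarrow> 'a \<Rightarrow> 'a \<Rightarrow> 'a \<Rightarrow> nat \<Rightarrow> ('ch,'a,'f) sys" where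
  "T_gamma c v eureka fail d arb no u x =
     SNu d (0, u)
       (SPar (SRcv c x (PSum (PCond (BEq (EVar x) (EVal v)) (PSnd d (EVal arb) PNil) PNil)
                              (PSnd fail (EVal no) PNil)))
             (SProc (sigmas 2 (PCond (BExp d) (PSnd eureka (EVal arb) PNil) PNil))))"

definition T_gamma_ok :: "'ch \<Rightarrow> 'ch \<Rightarrow> 'a \<Rightarrow> 'a \<Rightarrow> ('ch,'a,'f) sys" where
  "T_gamma_ok eureka d arb u =
     SNu d (0, u)
       (SPar (SProc (PSig (PSnd d (EVal arb) PNil)))
             (SProc (PSig (PCond (BExp d) (PSnd eureka (EVal arb) PNil) PNil))))"

end

theory Submission
  imports Defs
begin



primrec dbb :: "('ch \<Rightarrow> 'c) \<Rightarrow> ('ch,'a,'f) bexp \<Rightarrow> ('c,'a,'f) bexp" where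
  "dbb \<rho> (BEq e1 e2) = BEq e1 e2"
| "dbb \<rho> (BExp c) = BExp (\<rho> c)"

primrec dbp :: "('ch \<Rightarrow> 'c) \<Rightarrow> ('ch,'a,'f) proc \<Rightarrow> ('c,'a,'f) proc" where
  "dbp \<rho> (PSnd c e P) = PSnd (\<rho> c) e (dbp \<rho> P)"
| "dbp \<rho> (PRcv c x P Q) = PRcv (\<rho> c) x (dbp \<rho> P) (dbp \<rho> Q)"
| "dbp \<rho> (PSig P) = PSig (dbp \<rho> P)"
| "dbp \<rho> (PTau P) = PTau (dbp \<rho> P)"
| "dbp \<rho> (PSum P Q) = PSum (dbp \<rho> P) (dbp \<rho> Q)"
| "dbp \<rho> (PCond b P Q) = PCond (dbb \<rho> b) (dbp \<rho> P) (dbp \<rho> Q)"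
| "dbp \<rho> (PVar X) = PVar X"
| "dbp \<rho> PNil = PNil"
| "dbp \<rho> (PFix X P) = PFix X (dbp \<rho> P)"

primrec db :: "('ch \<Rightarrow> 'ch option) \<Rightarrow> ('ch,'a,'f) sys \<Rightarrow> ('ch option,'a,'f) sys" where
  "db \<rho> (SProc P) = SProc (dbp \<rho> P)"
| "db \<rho> (SRcv c x P) = SRcv (\<rho> c) x (dbp \<rho> P)"
| "db \<rho> (SPar A B) = SPar (db \<rho> A) (db \<rho> B)"
| "db \<rho> (SNu c s W) = SNu None s (db (\<rho>(c := None)) W)"

lemma dbb_ren: "dbb \<rho> (ren_b f b) = dbb (\<rho> \<circ> f) b"
  by (cases b) auto

lemma dbp_ren: "dbp \<rho> (ren_p f P) = dbp (\<rho> \<circ> f) P"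
  by (induction P) (auto simp: dbb_ren comp_def)

lemma db_ren: "inj f \<Longrightarrow> db \<rho> (ren_s f W) = db (\<rho> \<circ> f) W"
proof (induction W arbitrary: \<rho>)
  case (SNu c s W)
  have "(\<lambda>a. if f a = f c then None else \<rho> (f a)) = (\<lambda>a. \<rho> (f a))(c := None)"
    using SNu.prems by (auto simp: fun_eq_iff inj_eq)
  then show ?case using SNu by (simp add: comp_def)
qed (auto simp: dbp_ren)

lemma dbb_cong: "(\<forall>e\<in>chans_b b. \<rho> e = \<rho>' e) \<Longrightarrow> dbb \<rho> b = dbb \<rho>' b"
  by (cases b) auto

lemma dbp_cong: "(\<forall>e\<in>chans_p P. \<rho> e = \<rho>' e) \<Longrightarrow> dbp \<rho> P = dbp \<rho>' P"
  by (induction P) (auto intro: dbb_cong)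

lemma db_cong: "(\<forall>e\<in>fc W. \<rho> e = \<rho>' e) \<Longrightarrow> db \<rho> W = db \<rho>' W"
  by (induction W arbitrary: \<rho> \<rho>') (auto intro!: dbp_cong)

lemma swap_swap: "swap a b (swap a b x) = x"
  by (simp add: swap_def)

lemma inj_swap: "inj (swap a b)"
  by (metis injI swap_swap)

lemma alpha_db: "alpha W X \<Longrightarrow> db \<rho> W = db \<rho> X"
proof (induction arbitrary: \<rho> rule: alpha.induct)
  case (alpha_ren c' W c s)
  have "db \<rho> (SNu c' s (ren_s (swap c c') W)) = SNu None s (db ((\<rho>(c' := None)) \<circ> swap c c') W)"
    by (simp add: db_ren inj_swap)
  also have "db ((\<rho>(c' := None)) \<circ> swap c c') W = db (\<rho>(c := None)) W"
    using alpha_ren.hyps by (intro db_cong) (auto simp: swap_def)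
  finally show ?case by simp
qed auto




fun inert_p :: "('ch,'a,'f) proc \<Rightarrow> bool" where
  "inert_p (PSig P) = True"
| "inert_p PNil = True"
| "inert_p _ = False"

primrec inert_s :: "('ch,'a,'f) sys \<Rightarrow> bool" where
  "inert_s (SProc P) = inert_p P"
| "inert_s (SRcv c x P) = True"
| "inert_s (SPar A B) = (inert_s A \<and> inert_s B)"
| "inert_s (SNu c s W) = inert_s W"

primrec norcv_p :: "('ch,'a,'f) proc \<Rightarrow> bool" where
  "norcv_p (PSnd c e P) = norcv_p P"
| "norcv_p (PRcv c x P Q) = False"
| "norcv_p (PSig P) = norcv_p P"
| "norcv_p (PTau P) = norcv_p P"
| "norcv_p (PSum P Q) = (norcv_p P \<and> norcv_p Q)"
| "norcv_p (PCond b P Q) = (norcv_p P \<and> norcv_p Q)"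
| "norcv_p (PVar X) = True"
| "norcv_p PNil = True"
| "norcv_p (PFix X P) = False"

primrec norcv_s :: "('ch,'a,'f) sys \<Rightarrow> bool" where
  "norcv_s (SProc P) = norcv_p P"
| "norcv_s (SRcv c x P) = True"
| "norcv_s (SPar A B) = (norcv_s A \<and> norcv_s B)"
| "norcv_s (SNu c s W) = norcv_s W"

primrec nonu :: "('ch,'a,'f) sys \<Rightarrow> bool" where
  "nonu (SProc P) = True"
| "nonu (SRcv c x P) = True"
| "nonu (SPar A B) = (nonu A \<and> nonu B)"
| "nonu (SNu c s W) = False"

lemma inert_p_db: "inert_p (dbp \<rho> P) = inert_p P"
  by (cases P) auto
lemma inert_db: "inert_s (db \<rho> X) = inert_s X"
  by (induction X arbitrary: \<rho>) (auto simp: inert_p_db)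
lemma norcv_p_db: "norcv_p (dbp \<rho> P) = norcv_p P"
  by (induction P) auto
lemma norcv_db: "norcv_s (db \<rho> X) = norcv_s X"
  by (induction X arbitrary: \<rho>) (auto simp: norcv_p_db)

lemma alpha_inert: "alpha X Y \<Longrightarrow> inert_s X = inert_s Y"
  by (metis alpha_db inert_db)
lemma alpha_norcv: "alpha X Y \<Longrightarrow> norcv_s X = norcv_s Y"
  by (metis alpha_db norcv_db)

lemma alpha_nonu: "alpha X Y \<Longrightarrow> (nonu X \<or> nonu Y) \<Longrightarrow> X = Y"
  by (induction rule: alpha.induct) auto

lemma alpha_par_inv_aux: "alpha X Y \<Longrightarrow>
  (\<forall>A B. X = SPar A B \<longrightarrow> (\<exists>A' B'. Y = SPar A' B' \<and> alpha A A' \<and> alpha B B')) \<and>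
  (\<forall>A B. Y = SPar A B \<longrightarrow> (\<exists>A' B'. X = SPar A' B' \<and> alpha A' A \<and> alpha B' B))"
proof (induction rule: alpha.induct)
  case (alpha_refl W) then show ?case by (auto intro: alpha.alpha_refl)
next
  case (alpha_sym W W')
  show ?case
  proof (intro conjI allI impI)
    fix A B assume "W' = SPar A B"
    with alpha_sym.IH obtain A' B' where "W = SPar A' B'" "alpha A' A" "alpha B' B" by blast
    then show "\<exists>A' B'. W = SPar A' B' \<and> alpha A A' \<and> alpha B B'" by (blast intro: alpha.alpha_sym)
  next
    fix A B assume "W = SPar A B"
    with alpha_sym.IH obtain A' B' where "W' = SPar A' B'" "alpha A A'" "alpha B B'" by blast
    then show "\<exists>A' B'. W' = SPar A' B' \<and> alpha A' A \<and> alpha B' B" by (blast intro: alpha.alpha_sym)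
  qed
next
  case (alpha_trans W1 W2 W3)
  show ?case
  proof (intro conjI allI impI)
    fix A B assume "W1 = SPar A B"
    with alpha_trans.IH(1) obtain A' B' where 1: "W2 = SPar A' B'" "alpha A A'" "alpha B B'" by blast
    with alpha_trans.IH(2) obtain A'' B'' where "W3 = SPar A'' B''" "alpha A' A''" "alpha B' B''" by blast
    with 1 show "\<exists>A' B'. W3 = SPar A' B' \<and> alpha A A' \<and> alpha B B'" by (blast intro: alpha.alpha_trans)
  next
    fix A B assume "W3 = SPar A B"
    with alpha_trans.IH(2) obtain A' B' where 1: "W2 = SPar A' B'" "alpha A' A" "alpha B' B" by blast
    with alpha_trans.IH(1) obtain A'' B'' where "W1 = SPar A'' B''" "alpha A'' A'" "alpha B'' B'" by blast
    with 1 show "\<exists>A' B'. W1 = SPar A' B' \<and> alpha A' A \<and> alpha B' B" by (blast intro: alpha.alpha_trans)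
  qed
next
  case (alpha_par W1 W1' W2 W2') then show ?case by blast
next
  case (alpha_nu W W' c s) then show ?case by simp
next
  case (alpha_ren c' W c s) then show ?case by simp
qed

lemma alpha_par_inv: "alpha (SPar A B) Y \<Longrightarrow> \<exists>A' B'. Y = SPar A' B' \<and> alpha A A' \<and> alpha B B'"
  using alpha_par_inv_aux by blast

lemma norcv_rcv: "norcv_p P \<Longrightarrow> \<not> rcv_p P c"
  by (induction P) auto



lemma inert_trans: "trans \<delta> err I \<Gamma> X l Y \<Longrightarrow> inert_s X \<Longrightarrow> out_or_tau l \<Longrightarrow> False"
proof (induction rule: trans.induct)
  case (Alpha W W1 \<Gamma> l W1' W')
  then show ?case using alpha_inert by blast
qed simp_all

lemma norcv_trans: "trans \<delta> err I \<Gamma> X l Y \<Longrightarrow> l = In ch val \<Longrightarrow> norcv_s X \<Longrightarrow> alpha X Y"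
proof (induction rule: trans.induct)
  case (RcvIgn \<Gamma> W c v) then show ?case by (auto intro: alpha_refl)
next
  case (RcvPar \<Gamma> W1 c v W1' W2 W2') then show ?case by (auto intro: alpha_par)
next
  case (SumRcv1 \<Gamma> P c v W Q) then show ?case by (auto simp: rcv_conf_def norcv_rcv)
next
  case (SumRcv2 \<Gamma> Q c v W P) then show ?case by (auto simp: rcv_conf_def norcv_rcv)
next
  case (ResV \<Gamma> c s W l W')
  then show ?case by (auto intro: alpha_nu)
next
  case (Alpha W W1 \<Gamma> l W1' W')
  then show ?case using alpha_norcv by (meson alpha.alpha_trans)
qed auto




lemma par_inv: "trans \<delta> err I \<Gamma> X l Y \<Longrightarrow> X = SPar A B \<Longrightarrow> \<exists>A' B'. Y = SPar A' B' \<and>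
  ((\<exists>ch val. l = Out ch val \<and> ((trans \<delta> err I \<Gamma> A (Out ch val) A' \<and> trans \<delta> err I \<Gamma> B (In ch val) B') \<or>
        (trans \<delta> err I \<Gamma> A (In ch val) A' \<and> trans \<delta> err I \<Gamma> B (Out ch val) B'))) \<or>
   (\<exists>ch val. l = In ch val \<and> trans \<delta> err I \<Gamma> A (In ch val) A' \<and> trans \<delta> err I \<Gamma> B (In ch val) B') \<or>
   (l = Time \<and> trans \<delta> err I \<Gamma> A Time A' \<and> trans \<delta> err I \<Gamma> B Time B') \<or>
   (l = TauA \<and> ((trans \<delta> err I \<Gamma> A TauA A' \<and> alpha B B') \<or> (alpha A A' \<and> trans \<delta> err I \<Gamma> B TauA B'))))"
proof (induction arbitrary: A B rule: trans.induct)
  case (RcvIgn \<Gamma> W c v)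
  then have "\<not> rcv_conf \<Gamma> A c" "\<not> rcv_conf \<Gamma> B c" by (auto simp: rcv_conf_def)
  then show ?case using RcvIgn by (auto intro: trans.RcvIgn)
next
  case (Sync1 \<Gamma> W1 c v W1' W2 W2') then show ?case by blast
next
  case (Sync2 \<Gamma> W1 c v W1' W2 W2') then show ?case by blast
next
  case (RcvPar \<Gamma> W1 c v W1' W2 W2') then show ?case by blast
next
  case (TimePar \<Gamma> W1 W1' W2 W2') then show ?case by blast
next
  case (TauPar1 \<Gamma> W1 W1' W2) then show ?case by (blast intro: alpha_refl)
next
  case (TauPar2 \<Gamma> W2 W2' W1) then show ?case by (blast intro: alpha_refl)
next
  case (Alpha W W1 \<Gamma> l W1' W')
  from alpha_par_inv[of A B W1] Alpha.hyps(1) Alpha.prems obtain A1 B1 where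
    a1: "W1 = SPar A1 B1" "alpha A A1" "alpha B B1" by blast
  from Alpha.IH[OF a1(1)] obtain A1' B1' where
    y1: "W1' = SPar A1' B1'" and
    c: "(\<exists>ch val. l = Out ch val \<and> ((trans \<delta> err I \<Gamma> A1 (Out ch val) A1' \<and> trans \<delta> err I \<Gamma> B1 (In ch val) B1') \<or>
        (trans \<delta> err I \<Gamma> A1 (In ch val) A1' \<and> trans \<delta> err I \<Gamma> B1 (Out ch val) B1'))) \<or>
   (\<exists>ch val. l = In ch val \<and> trans \<delta> err I \<Gamma> A1 (In ch val) A1' \<and> trans \<delta> err I \<Gamma> B1 (In ch val) B1') \<or>
   (l = Time \<and> trans \<delta> err I \<Gamma> A1 Time A1' \<and> trans \<delta> err I \<Gamma> B1 Time B1') \<or>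
   (l = TauA \<and> ((trans \<delta> err I \<Gamma> A1 TauA A1' \<and> alpha B1 B1') \<or> (alpha A1 A1' \<and> trans \<delta> err I \<Gamma> B1 TauA B1')))"
    by blast
  from alpha_par_inv[of A1' B1' W'] Alpha.hyps(3) y1 obtain A' B' where
    a2: "W' = SPar A' B'" "alpha A1' A'" "alpha B1' B'" by blast
  have tA: "trans \<delta> err I \<Gamma> A l' A'" if "trans \<delta> err I \<Gamma> A1 l' A1'" for l'
    using trans.Alpha[OF a1(2) that a2(2)] .
  have tB: "trans \<delta> err I \<Gamma> B l' B'" if "trans \<delta> err I \<Gamma> B1 l' B1'" for l'
    using trans.Alpha[OF a1(3) that a2(3)] .
  have aA: "alpha A A'" if "alpha A1 A1'" using that a1(2) a2(2) by (blast intro: alpha_trans)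
  have aB: "alpha B B'" if "alpha B1 B1'" using that a1(3) a2(3) by (blast intro: alpha_trans)
  show ?case apply (rule exI[of _ A'], rule exI[of _ B']) using c tA tB aA aB a2(1) by blast
qed simp_all

lemma psig_inv: "trans \<delta> err I \<Gamma> X l Y \<Longrightarrow> X = SProc (PSig P) \<Longrightarrow>
  (l = Time \<and> Y = SProc P) \<or> (\<exists>a b. l = In a b \<and> Y = X)"
proof (induction rule: trans.induct)
  case (Alpha W W1 \<Gamma> l W1' W')
  then have "W1 = W" using alpha_nonu by fastforce
  with Alpha have "(l = Time \<and> W1' = SProc P) \<or> (\<exists>a b. l = In a b \<and> W1' = W)" by blast
  moreover have "W' = W1'" using Alpha.hyps(3) calculation alpha_nonu Alpha.prems by fastforce
  ultimately show ?case by simp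
qed simp_all

lemma srcv_inv: "trans \<delta> err I \<Gamma> X l Y \<Longrightarrow> X = SRcv c x P \<Longrightarrow>
  (l = Time \<and> ((1 < fst (\<Gamma> c) \<and> Y = X) \<or> (\<exists>w. \<Gamma> c = (1,w) \<and> Y = SProc (dsubst x w P))))
  \<or> (\<exists>a b. l = In a b \<and> Y = X)"
proof (induction rule: trans.induct)
  case (Alpha W W1 \<Gamma> l W1' W')
  then have "W1 = W" using alpha_nonu by fastforce
  with Alpha have h: "(l = Time \<and> ((1 < fst (\<Gamma> c) \<and> W1' = W) \<or> (\<exists>w. \<Gamma> c = (1,w) \<and> W1' = SProc (dsubst x w P))))
  \<or> (\<exists>a b. l = In a b \<and> W1' = W)" by blast
  then have "nonu W1'" using Alpha.prems by auto
  then have "W' = W1'" using Alpha.hyps(3) alpha_nonu by fastforce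
  with h show ?case by simp
qed auto

lemma psum_inv: "trans \<delta> err I \<Gamma> X l Y \<Longrightarrow> X = SProc (PSum P Q) \<Longrightarrow>
  (out_or_tau l \<and> (trans \<delta> err I \<Gamma> (SProc P) l Y \<or> trans \<delta> err I \<Gamma> (SProc Q) l Y)) \<or> l = Time \<or> (\<exists>a b. l = In a b)"
proof (induction rule: trans.induct)
  case (Alpha W W1 \<Gamma> l W1' W')
  then have "W1 = W" using alpha_nonu by fastforce
  with Alpha show ?case by (meson alpha_refl trans.Alpha)
qed auto

lemma pcond_inv: "trans \<delta> err I \<Gamma> X l Y \<Longrightarrow> X = SProc (PCond bb P Q) \<Longrightarrow>
  (l = TauA \<and> ((beval I \<Gamma> bb \<and> Y = SProc (PSig P)) \<or> (\<not> beval I \<Gamma> bb \<and> Y = SProc (PSig Q)))) \<or> (\<exists>a b. l = In a b)"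
proof (induction rule: trans.induct)
  case (Alpha W W1 \<Gamma> l W1' W')
  then have "W1 = W" using alpha_nonu by fastforce
  with Alpha have h: "(l = TauA \<and> ((beval I \<Gamma> bb \<and> W1' = SProc (PSig P)) \<or> (\<not> beval I \<Gamma> bb \<and> W1' = SProc (PSig Q)))) \<or> (\<exists>a b. l = In a b)" by blast
  show ?case
  proof (cases "\<exists>a b. l = In a b")
    case False
    with h have "nonu W1'" by auto
    then have "W' = W1'" using Alpha.hyps(3) alpha_nonu by fastforce
    with h show ?thesis by simp
  qed simp
qed auto

lemma psnd_inv: "trans \<delta> err I \<Gamma> X l Y \<Longrightarrow> X = SProc (PSnd ch e P) \<Longrightarrow>
  (\<exists>val. l = Out ch val \<and> eval I e = Some val \<and> Y = SProc (sigmas (\<delta> val) P)) \<or> (\<exists>a b. l = In a b)"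
proof (induction rule: trans.induct)
  case (Alpha W W1 \<Gamma> l W1' W')
  then have "W1 = W" using alpha_nonu by fastforce
  with Alpha have h: "(\<exists>val. l = Out ch val \<and> eval I e = Some val \<and> W1' = SProc (sigmas (\<delta> val) P)) \<or> (\<exists>a b. l = In a b)" by blast
  show ?case
  proof (cases "\<exists>a b. l = In a b")
    case False
    with h have "nonu W1'" by auto
    then have "W' = W1'" using Alpha.hyps(3) alpha_nonu by fastforce
    with h show ?thesis by simp
  qed simp
qed auto





lemma sig2: "sigmas 2 P = PSig (PSig P)" by (simp add: numeral_2_eq_2)
lemma sig1: "sigmas 1 P = PSig P" by simp

definition S1 :: "'a \<Rightarrow> 'ch \<Rightarrow> 'ch \<Rightarrow> 'ch \<Rightarrow> 'a \<Rightarrow> 'a \<Rightarrow> 'a \<Rightarrow> 'a \<Rightarrow> ('ch,'a,'f) sys" where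
  "S1 v eureka fail d arb no u w =
     SNu d (0, u)
       (SPar (SProc (PSum (PCond (BEq (EVal w) (EVal v)) (PSnd d (EVal arb) PNil) PNil)
                              (PSnd fail (EVal no) PNil)))
             (SProc (PSig (PCond (BExp d) (PSnd eureka (EVal arb) PNil) PNil))))"

definition dead :: "'ch \<Rightarrow> 'ch \<Rightarrow> 'a \<Rightarrow> 'a \<Rightarrow> ('ch,'a,'f) sys \<Rightarrow> bool" where
  "dead eureka d arb u Y \<longleftrightarrow> inert_s Y \<and> norcv_s Y \<and> db Some Y \<noteq> db Some (T_gamma_ok eureka d arb u :: ('ch,'a,'f) sys)"

lemma db_SPar: "db \<rho> W = SPar A B \<longleftrightarrow> (\<exists>W1 W2. W = SPar W1 W2 \<and> db \<rho> W1 = A \<and> db \<rho> W2 = B)"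
  by (cases W) auto
lemma db_SProc: "db \<rho> W = SProc Q \<longleftrightarrow> (\<exists>P. W = SProc P \<and> dbp \<rho> P = Q)"
  by (cases W) auto
lemma db_SRcv: "db \<rho> W = SRcv a y Q \<longleftrightarrow> (\<exists>c P. W = SRcv c y P \<and> \<rho> c = a \<and> dbp \<rho> P = Q)"
  by (cases W) auto
lemma db_SNu: "db \<rho> W = SNu a s Q \<longleftrightarrow> (a = None \<and> (\<exists>c B. W = SNu c s B \<and> db (\<rho>(c:=None)) B = Q))"
  by (cases W) auto
lemma dbp_PSnd: "dbp \<rho> P = PSnd a e Q \<longleftrightarrow> (\<exists>c P'. P = PSnd c e P' \<and> \<rho> c = a \<and> dbp \<rho> P' = Q)"
  by (cases P) auto
lemma dbp_PSig: "dbp \<rho> P = PSig Q \<longleftrightarrow> (\<exists>P'. P = PSig P' \<and> dbp \<rho> P' = Q)"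
  by (cases P) auto
lemma dbp_PSum: "dbp \<rho> P = PSum Q1 Q2 \<longleftrightarrow> (\<exists>P1 P2. P = PSum P1 P2 \<and> dbp \<rho> P1 = Q1 \<and> dbp \<rho> P2 = Q2)"
  by (cases P) auto
lemma dbp_PCond: "dbp \<rho> P = PCond bb Q1 Q2 \<longleftrightarrow> (\<exists>b P1 P2. P = PCond b P1 P2 \<and> dbb \<rho> b = bb \<and> dbp \<rho> P1 = Q1 \<and> dbp \<rho> P2 = Q2)"
  by (cases P) auto
lemma dbp_PNil: "dbp \<rho> P = PNil \<longleftrightarrow> P = PNil"
  by (cases P) auto
lemma dbb_BEq: "dbb \<rho> b = BEq e1 e2 \<longleftrightarrow> b = BEq e1 e2"
  by (cases b) auto
lemma dbb_BExp: "dbb \<rho> b = BExp a \<longleftrightarrow> (\<exists>c. b = BExp c \<and> \<rho> c = a)"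
  by (cases b) auto

lemmas db_inv = db_SPar db_SProc db_SRcv db_SNu dbp_PSnd dbp_PSig dbp_PSum dbp_PCond dbp_PNil dbb_BEq dbb_BExp

lemma s0_time:
  assumes dn: "d \<noteq> c" "d \<noteq> eureka" "d \<noteq> fail"
  shows "trans \<delta> err I \<Gamma> X l Y \<Longrightarrow> l = Time \<Longrightarrow>
    db Some X = db Some (T_gamma c v eureka fail d arb no u x :: ('ch,'a,'f) sys) \<Longrightarrow>
    (\<exists>w. \<Gamma> c = (1,w) \<and> db Some Y = db Some (S1 v eureka fail d arb no u w :: ('ch,'a,'f) sys))
    \<or> (1 < fst (\<Gamma> c) \<and> dead eureka d arb u Y)"
proof (induction rule: trans.induct)
  case (Alpha W W1 \<Gamma> l W1' W')
  then show ?case using alpha_db[of W W1] alpha_db[of W1' W'] alpha_inert alpha_norcv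
    unfolding dead_def by metis
next
  case (ResV \<Gamma> e s W l W')
  from ResV.prems(2) have
    W: "W = SPar (SRcv c x (PSum (PCond (BEq (EVar x) (EVal v)) (PSnd e (EVal arb) PNil) PNil) (PSnd fail (EVal no) PNil)))
                 (SProc (PSig (PSig (PCond (BExp e) (PSnd eureka (EVal arb) PNil) PNil))))"
     and ne: "e \<noteq> c" "e \<noteq> fail" "e \<noteq> eureka" and s: "s = (0,u)"
    using dn by (auto simp: T_gamma_def sig2 db_inv split: if_splits)
  have tW: "trans \<delta> err I (\<Gamma>(e := s)) W Time W'" using ResV.hyps(1) ResV.prems(1) by simp
  from par_inv[OF tW W] have "\<exists>A' B'. W' = SPar A' B' \<and> trans \<delta> err I (\<Gamma>(e := s)) (SRcv c x (PSum (PCond (BEq (EVar x) (EVal v)) (PSnd e (EVal arb) PNil) PNil) (PSnd fail (EVal no) PNil))) Time A' \<and> trans \<delta> err I (\<Gamma>(e := s)) (SProc (PSig (PSig (PCond (BExp e) (PSnd eureka (EVal arb) PNil) PNil)))) Time B'"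
    by simp
  then obtain A' B' where W': "W' = SPar A' B'"
    and tA: "trans \<delta> err I (\<Gamma>(e := s)) (SRcv c x (PSum (PCond (BEq (EVar x) (EVal v)) (PSnd e (EVal arb) PNil) PNil) (PSnd fail (EVal no) PNil))) Time A'"
    and tB: "trans \<delta> err I (\<Gamma>(e := s)) (SProc (PSig (PSig (PCond (BExp e) (PSnd eureka (EVal arb) PNil) PNil)))) Time B'"
    by blast
  from psig_inv[OF tB refl] have B': "B' = SProc (PSig (PCond (BExp e) (PSnd eureka (EVal arb) PNil) PNil))" by simp
  from srcv_inv[OF tA refl] ne(1) have
    "(1 < fst (\<Gamma> c) \<and> A' = SRcv c x (PSum (PCond (BEq (EVar x) (EVal v)) (PSnd e (EVal arb) PNil) PNil) (PSnd fail (EVal no) PNil)))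
     \<or> (\<exists>w. \<Gamma> c = (1,w) \<and> A' = SProc (dsubst x w (PSum (PCond (BEq (EVar x) (EVal v)) (PSnd e (EVal arb) PNil) PNil) (PSnd fail (EVal no) PNil))))"
    by auto
  then show ?case
  proof
    assume h: "1 < fst (\<Gamma> c) \<and> A' = SRcv c x (PSum (PCond (BEq (EVar x) (EVal v)) (PSnd e (EVal arb) PNil) PNil) (PSnd fail (EVal no) PNil))"
    then show ?case using W' B' s dn ne ResV.prems(1) by (simp add: dead_def T_gamma_ok_def)
  next
    assume "\<exists>w. \<Gamma> c = (1,w) \<and> A' = SProc (dsubst x w (PSum (PCond (BEq (EVar x) (EVal v)) (PSnd e (EVal arb) PNil) PNil) (PSnd fail (EVal no) PNil)))"
    then obtain w where h: "\<Gamma> c = (1,w)" "A' = SProc (dsubst x w (PSum (PCond (BEq (EVar x) (EVal v)) (PSnd e (EVal arb) PNil) PNil) (PSnd fail (EVal no) PNil)))" by (elim exE conjE)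
    have "db Some (SNu e (upd \<delta> err l (\<Gamma>(e := s)) e) W') = db Some (S1 v eureka fail d arb no u w :: ('ch,'a,'f) sys)"
      using W' B' h s dn ne ResV.prems(1) by (simp add: S1_def)
    with h(1) show ?case by (intro disjI1 exI[of _ w] conjI)
  qed
qed (simp_all add: T_gamma_def)


lemma sumE_step: "trans \<delta> err I \<Gamma> (SProc (PSum (PCond bb P PNil) (PSnd f (EVal n) PNil))) l A' \<Longrightarrow> out_or_tau l \<Longrightarrow>
   (l = TauA \<and> ((beval I \<Gamma> bb \<and> A' = SProc (PSig P)) \<or> (\<not> beval I \<Gamma> bb \<and> A' = SProc (PSig PNil))))
   \<or> (l = Out f n \<and> A' = SProc (sigmas (\<delta> n) PNil))"
proof -
  assume t: "trans \<delta> err I \<Gamma> (SProc (PSum (PCond bb P PNil) (PSnd f (EVal n) PNil))) l A'" and o: "out_or_tau l"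
  have no_in: "\<not> (\<exists>a b. l = In a b)" "l \<noteq> Time" using o by (cases l; auto)+
  from psum_inv[OF t refl] no_in have
    "trans \<delta> err I \<Gamma> (SProc (PCond bb P PNil)) l A' \<or> trans \<delta> err I \<Gamma> (SProc (PSnd f (EVal n) PNil)) l A'"
    by blast
  then show ?thesis
  proof
    assume "trans \<delta> err I \<Gamma> (SProc (PCond bb P PNil)) l A'"
    from pcond_inv[OF this refl] no_in show ?thesis by blast
  next
    assume "trans \<delta> err I \<Gamma> (SProc (PSnd f (EVal n) PNil)) l A'"
    from psnd_inv[OF this refl] no_in show ?thesis by auto
  qed
qed

lemma sig_noout: "trans \<delta> err I \<Gamma> (SProc (PSig P)) l B' \<Longrightarrow> out_or_tau l \<Longrightarrow> False"
  using psig_inv[of \<delta> err I \<Gamma> "SProc (PSig P)" l B' P] by auto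

lemma s1_step:
  assumes dn: "d \<noteq> c" "d \<noteq> eureka" "d \<noteq> fail" and no: "\<delta> no = 1"
  shows "trans \<delta> err I \<Gamma> X l Y \<Longrightarrow> out_or_tau l \<Longrightarrow>
    db Some X = db Some (S1 v eureka fail d arb no u w :: ('ch,'a,'f) sys) \<Longrightarrow>
    (w = v \<and> l = TauA \<and> db Some Y = db Some (T_gamma_ok eureka d arb u :: ('ch,'a,'f) sys))
    \<or> dead eureka d arb u Y"
proof (induction rule: trans.induct)
  case (Alpha W W1 \<Gamma> l W1' W')
  then show ?case using alpha_db[of W W1] alpha_db[of W1' W'] alpha_inert alpha_norcv
    unfolding dead_def by metis
next
  case (ResI \<Gamma> e s W w' W')
  from ResI.prems(2) have
    W: "W = SPar (SProc (PSum (PCond (BEq (EVal w) (EVal v)) (PSnd e (EVal arb) PNil) PNil) (PSnd fail (EVal no) PNil)))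
                 (SProc (PSig (PCond (BExp e) (PSnd eureka (EVal arb) PNil) PNil)))"
     and ne: "e \<noteq> fail" "e \<noteq> eureka" and s: "s = (0,u)"
    using dn by (auto simp: S1_def db_inv split: if_splits)
  from par_inv[OF ResI.hyps(1) W] obtain A' B' where
    "(trans \<delta> err I (\<Gamma>(e := s)) (SProc (PSum (PCond (BEq (EVal w) (EVal v)) (PSnd e (EVal arb) PNil) PNil) (PSnd fail (EVal no) PNil))) (Out e w') A')
     \<or> trans \<delta> err I (\<Gamma>(e := s)) (SProc (PSig (PCond (BExp e) (PSnd eureka (EVal arb) PNil) PNil))) (Out e w') B'"
    by auto
  then have False
  proof
    assume "trans \<delta> err I (\<Gamma>(e := s)) (SProc (PSum (PCond (BEq (EVal w) (EVal v)) (PSnd e (EVal arb) PNil) PNil) (PSnd fail (EVal no) PNil))) (Out e w') A'"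
    from sumE_step[OF this] ne show False by simp
  next
    assume "trans \<delta> err I (\<Gamma>(e := s)) (SProc (PSig (PCond (BExp e) (PSnd eureka (EVal arb) PNil) PNil))) (Out e w') B'"
    from sig_noout[OF this] show False by simp
  qed
  then show ?case ..
next
  case (ResV \<Gamma> e s W l W')
  from ResV.prems(2) have
    W: "W = SPar (SProc (PSum (PCond (BEq (EVal w) (EVal v)) (PSnd e (EVal arb) PNil) PNil) (PSnd fail (EVal no) PNil)))
                 (SProc (PSig (PCond (BExp e) (PSnd eureka (EVal arb) PNil) PNil)))"
     and ne: "e \<noteq> fail" "e \<noteq> eureka" and s: "s = (0,u)"
    using dn by (auto simp: S1_def db_inv split: if_splits)
  have nt: "l \<noteq> Time" "\<not> (\<exists>a b. l = In a b)" using ResV.prems(1) by (cases l; auto)+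
  from par_inv[OF ResV.hyps(1) W] nt obtain A' B' where W': "W' = SPar A' B'" and
    c: "(\<exists>ch val. l = Out ch val \<and> ((trans \<delta> err I (\<Gamma>(e := s)) (SProc (PSum (PCond (BEq (EVal w) (EVal v)) (PSnd e (EVal arb) PNil) PNil) (PSnd fail (EVal no) PNil))) (Out ch val) A' \<and> trans \<delta> err I (\<Gamma>(e := s)) (SProc (PSig (PCond (BExp e) (PSnd eureka (EVal arb) PNil) PNil))) (In ch val) B')
       \<or> trans \<delta> err I (\<Gamma>(e := s)) (SProc (PSig (PCond (BExp e) (PSnd eureka (EVal arb) PNil) PNil))) (Out ch val) B'))
     \<or> (l = TauA \<and> ((trans \<delta> err I (\<Gamma>(e := s)) (SProc (PSum (PCond (BEq (EVal w) (EVal v)) (PSnd e (EVal arb) PNil) PNil) (PSnd fail (EVal no) PNil))) TauA A' \<and> alpha (SProc (PSig (PCond (BExp e) (PSnd eureka (EVal arb) PNil) PNil))) B')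
       \<or> trans \<delta> err I (\<Gamma>(e := s)) (SProc (PSig (PCond (BExp e) (PSnd eureka (EVal arb) PNil) PNil))) TauA B'))"
    by blast
  show ?case
  proof (cases "l = TauA")
    case True
    with c sig_noout have h: "trans \<delta> err I (\<Gamma>(e := s)) (SProc (PSum (PCond (BEq (EVal w) (EVal v)) (PSnd e (EVal arb) PNil) PNil) (PSnd fail (EVal no) PNil))) TauA A'"
       "alpha (SProc (PSig (PCond (BExp e) (PSnd eureka (EVal arb) PNil) PNil))) B'"
      by (metis act.distinct out_or_tau.simps)+
    from h(2) have B': "B' = SProc (PSig (PCond (BExp e) (PSnd eureka (EVal arb) PNil) PNil))"
      using alpha_nonu by fastforce
    from sumE_step[OF h(1)] have "(w = v \<and> A' = SProc (PSig (PSnd e (EVal arb) PNil))) \<or> (w \<noteq> v \<and> A' = SProc (PSig PNil))"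
      by auto
    then show ?thesis using W' B' True s dn ne
      by (auto simp: dead_def T_gamma_ok_def)
  next
    case False
    with c sig_noout obtain ch val where l: "l = Out ch val" and
      h: "trans \<delta> err I (\<Gamma>(e := s)) (SProc (PSum (PCond (BEq (EVal w) (EVal v)) (PSnd e (EVal arb) PNil) PNil) (PSnd fail (EVal no) PNil))) (Out ch val) A'"
         "trans \<delta> err I (\<Gamma>(e := s)) (SProc (PSig (PCond (BExp e) (PSnd eureka (EVal arb) PNil) PNil))) (In ch val) B'"
      by (metis out_or_tau.simps(1))
    from sumE_step[OF h(1)] no have A': "A' = SProc (PSig PNil)" by auto
    from psig_inv[OF h(2) refl] have B': "B' = SProc (PSig (PCond (BExp e) (PSnd eureka (EVal arb) PNil) PNil))" by auto
    show ?thesis using W' A' B' dn ne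
      by (auto simp: dead_def T_gamma_ok_def)
  qed
qed (simp_all add: S1_def)




lemma in_same: "trans \<delta> err I G T (In ch val) T' \<Longrightarrow> norcv_s T \<Longrightarrow> db Some T' = db Some T"
  using norcv_trans alpha_db by metis

lemma red_i_par: "red_i \<delta> err I (G, SPar A B) C2 \<Longrightarrow>
   \<exists>l A' B'. out_or_tau l \<and> C2 = (upd \<delta> err l G, SPar A' B') \<and>
  ((\<exists>ch val. l = Out ch val \<and> ((trans \<delta> err I G A (Out ch val) A' \<and> trans \<delta> err I G B (In ch val) B') \<or>
        (trans \<delta> err I G A (In ch val) A' \<and> trans \<delta> err I G B (Out ch val) B'))) \<or>
   (l = TauA \<and> ((trans \<delta> err I G A TauA A' \<and> alpha B B') \<or> (alpha A A' \<and> trans \<delta> err I G B TauA B'))))"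
proof -
  assume "red_i \<delta> err I (G, SPar A B) C2"
  then obtain l where l: "out_or_tau l" "trans \<delta> err I G (SPar A B) l (snd C2)" "fst C2 = upd \<delta> err l G"
    by (auto simp: red_i_def)
  have nt: "l \<noteq> Time" "\<not> (\<exists>a b. l = In a b)" using l(1) by (cases l; auto)+
  from par_inv[OF l(2) refl] nt obtain A' B' where "snd C2 = SPar A' B'" and
    "((\<exists>ch val. l = Out ch val \<and> ((trans \<delta> err I G A (Out ch val) A' \<and> trans \<delta> err I G B (In ch val) B') \<or>
        (trans \<delta> err I G A (In ch val) A' \<and> trans \<delta> err I G B (Out ch val) B'))) \<or>
     (l = TauA \<and> ((trans \<delta> err I G A TauA A' \<and> alpha B B') \<or> (alpha A A' \<and> trans \<delta> err I G B TauA B'))))"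
    by blast
  then show ?thesis using l by (intro exI[of _ l] exI[of _ A'] exI[of _ B']) (cases C2; auto)
qed

lemma inert_stepQ:
  assumes Qtau: "\<And>G X Y. Q G X \<Longrightarrow> trans \<delta> err I G X TauA Y \<Longrightarrow> Q G Y"
    and Qout: "\<And>G X Y ch val. Q G X \<Longrightarrow> trans \<delta> err I G X (Out ch val) Y \<Longrightarrow> Q (upd \<delta> err (Out ch val) G) Y"
  shows "red_i \<delta> err I (G, SPar A T) C2 \<Longrightarrow> inert_s T \<Longrightarrow> norcv_s T \<Longrightarrow> Q G A \<Longrightarrow>
    \<exists>G' A' T'. C2 = (G', SPar A' T') \<and> Q G' A' \<and> db Some T' = db Some T"
proof -
  assume r: "red_i \<delta> err I (G, SPar A T) C2" and i: "inert_s T" "norcv_s T" and q: "Q G A"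
  from red_i_par[OF r] obtain l A' T' where o: "out_or_tau l" and C2: "C2 = (upd \<delta> err l G, SPar A' T')" and
    c: "((\<exists>ch val. l = Out ch val \<and> ((trans \<delta> err I G A (Out ch val) A' \<and> trans \<delta> err I G T (In ch val) T') \<or>
        (trans \<delta> err I G A (In ch val) A' \<and> trans \<delta> err I G T (Out ch val) T'))) \<or>
     (l = TauA \<and> ((trans \<delta> err I G A TauA A' \<and> alpha T T') \<or> (alpha A A' \<and> trans \<delta> err I G T TauA T'))))"
    by blast
  have noT: "False" if "trans \<delta> err I G T l' T''" "out_or_tau l'" for l' T''
    using inert_trans[OF that(1) i(1) that(2)] .
  from c show ?thesis
  proof (elim disjE exE conjE)
    fix ch val assume h: "l = Out ch val" "trans \<delta> err I G A (Out ch val) A'" "trans \<delta> err I G T (In ch val) T'"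
    have "Q (upd \<delta> err l G) A'" using Qout[OF q h(2)] h(1) by simp
    moreover have "db Some T' = db Some T" using in_same[OF h(3) i(2)] .
    ultimately show ?thesis using C2 by blast
  next
    fix ch val assume "trans \<delta> err I G T (Out ch val) T'"
    then show ?thesis using noT by force
  next
    assume h: "l = TauA" "trans \<delta> err I G A TauA A'" "alpha T T'"
    have "Q (upd \<delta> err l G) A'" using Qtau[OF q h(2)] h(1) by simp
    moreover have "db Some T' = db Some T" using alpha_db[OF h(3)] by simp
    ultimately show ?thesis using C2 by blast
  next
    assume "trans \<delta> err I G T TauA T'"
    then show ?thesis using noT by force
  qed
qed




lemma phase1:
  assumes Qtau: "\<And>G X Y. Q G X \<Longrightarrow> trans \<delta> err I G X TauA Y \<Longrightarrow> Q G Y"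
    and Qout: "\<And>G X Y ch val. Q G X \<Longrightarrow> trans \<delta> err I G X (Out ch val) Y \<Longrightarrow> Q (upd \<delta> err (Out ch val) G) Y"
    and i0: "inert_s T0" "norcv_s T0"
  shows "(red_i \<delta> err I)\<^sup>*\<^sup>* C C' \<Longrightarrow> C = (G, SPar A T) \<Longrightarrow> Q G A \<Longrightarrow> db Some T = db Some T0 \<Longrightarrow>
    \<exists>G' A' T'. C' = (G', SPar A' T') \<and> Q G' A' \<and> db Some T' = db Some T0"
proof (induction rule: rtranclp_induct)
  case base then show ?case by blast
next
  case (step C1 C2)
  then obtain G1 A1 T1 where h: "C1 = (G1, SPar A1 T1)" "Q G1 A1" "db Some T1 = db Some T0" by blast
  have iT: "inert_s T1" "norcv_s T1" using h(3) i0 by (metis inert_db norcv_db)+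
  have "\<exists>G' A' T'. C2 = (G', SPar A' T') \<and> Q G' A' \<and> db Some T' = db Some T1"
    by (rule inert_stepQ[where Q=Q, OF Qtau Qout]) (use step.hyps(2) h iT in auto)
  then show ?case using h(3) by auto
qed

lemma phase3:
  assumes dn: "d \<noteq> c" "d \<noteq> eureka" "d \<noteq> fail" and no: "\<delta> no = 1"
    and Qtau: "\<And>G X Y. Q G X \<Longrightarrow> trans \<delta> err I G X TauA Y \<Longrightarrow> Q G Y"
    and Qout: "\<And>G X Y ch val. Q G X \<Longrightarrow> trans \<delta> err I G X (Out ch val) Y \<Longrightarrow> Q (upd \<delta> err (Out ch val) G) Y"
    and Qalpha: "\<And>G X Y. Q G X \<Longrightarrow> alpha X Y \<Longrightarrow> Q G Y"
  shows "(red_i \<delta> err I)\<^sup>*\<^sup>* C C' \<Longrightarrow> C' = (G', SPar W' (T_gamma_ok eureka d arb u)) \<Longrightarrow>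
    \<forall>G A T. C = (G, SPar A T) \<longrightarrow> \<not> dead eureka d arb u T \<and>
      (Q G A \<longrightarrow> (db Some T = db Some (T_gamma_ok eureka d arb u :: ('ch,'a,'f) sys) \<longrightarrow> Q G' W') \<and>
         (db Some T = db Some (S1 v eureka fail d arb no u w :: ('ch,'a,'f) sys) \<longrightarrow> w = v \<and> Q G' W'))"
proof (induction rule: converse_rtranclp_induct)
  case base
  then show ?case using dn by (auto simp: dead_def S1_def T_gamma_ok_def)
next
  case (step C C1)
  have IH: "\<forall>G A T. C1 = (G, SPar A T) \<longrightarrow> \<not> dead eureka d arb u T \<and>
      (Q G A \<longrightarrow> (db Some T = db Some (T_gamma_ok eureka d arb u :: ('ch,'a,'f) sys) \<longrightarrow> Q G' W') \<and>
         (db Some T = db Some (S1 v eureka fail d arb no u w :: ('ch,'a,'f) sys) \<longrightarrow> w = v \<and> Q G' W'))"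
    using step.IH step.prems by blast
  show ?case
  proof (intro allI impI conjI)
    fix G A T assume C: "C = (G, SPar A T)"
    show "\<not> dead eureka d arb u T"
    proof
      assume dT: "dead eureka d arb u T"
      then have i: "inert_s T" "norcv_s T" by (auto simp: dead_def)
      have "\<exists>G1 A1 T1. C1 = (G1, SPar A1 T1) \<and> True \<and> db Some T1 = db Some T"
        by (rule inert_stepQ[where Q="\<lambda>_ _. True"]) (use step.hyps(1) C i in auto)
      then obtain G1 A1 T1 where "C1 = (G1, SPar A1 T1)" "db Some T1 = db Some T" by auto
      moreover have "dead eureka d arb u T1" using dT calculation(2)
        by (metis dead_def inert_db norcv_db)
      ultimately show False using IH by blast
    qed
  next
    fix G A T assume C: "C = (G, SPar A T)" and q: "Q G A"
      and tk: "db Some T = db Some (T_gamma_ok eureka d arb u :: ('ch,'a,'f) sys)"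
    have "inert_s (db Some T)" "norcv_s (db Some T)" using tk by (simp_all add: T_gamma_ok_def)
    then have i: "inert_s T" "norcv_s T" by (simp_all add: inert_db norcv_db)
    have "\<exists>G1 A1 T1. C1 = (G1, SPar A1 T1) \<and> Q G1 A1 \<and> db Some T1 = db Some T"
      by (rule inert_stepQ[where Q=Q, OF Qtau Qout]) (use step.hyps(1) C i q in auto)
    then obtain G1 A1 T1 where "C1 = (G1, SPar A1 T1)" "Q G1 A1" "db Some T1 = db Some T" by auto
    then show "Q G' W'" using IH tk by metis
  next
    fix G A T assume C: "C = (G, SPar A T)" and q: "Q G A"
      and s1: "db Some T = db Some (S1 v eureka fail d arb no u w :: ('ch,'a,'f) sys)"
    have "norcv_s (db Some T)" using s1 by (simp add: S1_def)
    then have nr: "norcv_s T" by (simp add: norcv_db)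
    from red_i_par[of \<delta> err I G A T C1] step.hyps(1) C obtain l A' T' where
      o: "out_or_tau l" and C1: "C1 = (upd \<delta> err l G, SPar A' T')" and
      c: "((\<exists>ch val. l = Out ch val \<and> ((trans \<delta> err I G A (Out ch val) A' \<and> trans \<delta> err I G T (In ch val) T') \<or>
        (trans \<delta> err I G A (In ch val) A' \<and> trans \<delta> err I G T (Out ch val) T'))) \<or>
       (l = TauA \<and> ((trans \<delta> err I G A TauA A' \<and> alpha T T') \<or> (alpha A A' \<and> trans \<delta> err I G T TauA T'))))"
      by blast
    have IH1: "\<not> dead eureka d arb u T'" "Q (upd \<delta> err l G) A' \<Longrightarrow> db Some T' = db Some (T_gamma_ok eureka d arb u :: ('ch,'a,'f) sys) \<Longrightarrow> Q G' W'"
      "Q (upd \<delta> err l G) A' \<Longrightarrow> db Some T' = db Some (S1 v eureka fail d arb no u w :: ('ch,'a,'f) sys) \<Longrightarrow> w = v \<and> Q G' W'"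
      using IH C1 by blast+
    have "w = v \<and> Q G' W'"
      using c
    proof (elim disjE exE conjE)
      fix ch val assume h: "l = Out ch val" "trans \<delta> err I G A (Out ch val) A'" "trans \<delta> err I G T (In ch val) T'"
      have "Q (upd \<delta> err l G) A'" using Qout[OF q h(2)] h(1) by simp
      moreover have "db Some T' = db Some T" using in_same[OF h(3) nr] .
      ultimately show ?thesis using IH1(3) s1 by simp
    next
      fix ch val assume h: "l = Out ch val" "trans \<delta> err I G T (Out ch val) T'"
      from s1_step[OF dn no h(2) _ s1] h(1) have "dead eureka d arb u T'" by simp
      with IH1(1) show ?thesis by simp
    next
      assume h: "l = TauA" "trans \<delta> err I G A TauA A'" "alpha T T'"
      have "Q (upd \<delta> err l G) A'" using Qtau[OF q h(2)] h(1) by simp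
      moreover have "db Some T' = db Some T" using alpha_db[OF h(3)] by simp
      ultimately show ?thesis using IH1(3) s1 by simp
    next
      assume h: "l = TauA" "alpha A A'" "trans \<delta> err I G T TauA T'"
      have "Q (upd \<delta> err l G) A'" using Qalpha[OF q h(2)] h(1) by simp
      moreover from s1_step[OF dn no h(3) _ s1]
      have "(w = v \<and> db Some T' = db Some (T_gamma_ok eureka d arb u :: ('ch,'a,'f) sys)) \<or> dead eureka d arb u T'"
        by simp
      ultimately show ?thesis using IH1 by blast
    qed
    then show "w = v" "Q G' W'" by simp_all
  qed
qed




lemma ext_tau_alpha: "ext_tau \<delta> err I p (G, Wb) \<Longrightarrow> alpha Wb W' \<Longrightarrow> ext_tau \<delta> err I p (G, W')"
  unfolding ext_tau_def
  by (auto elim!: ext.cases intro: ext.intros trans.Alpha[OF alpha_refl])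

lemma weak_alpha: "weak_ext \<delta> err I G0 W0 (EGamma ch val) G' Wb \<Longrightarrow> alpha Wb W' \<Longrightarrow>
  weak_ext \<delta> err I G0 W0 (EGamma ch val) G' W'"
proof -
  assume w: "weak_ext \<delta> err I G0 W0 (EGamma ch val) G' Wb" and a: "alpha Wb W'"
  then obtain G1 W1 G2 W2 where t1: "(ext_tau \<delta> err I)\<^sup>*\<^sup>* (G0, W0) (G1, W1)"
    and e: "ext \<delta> err I G1 W1 (EGamma ch val) G2 W2"
    and t2: "(ext_tau \<delta> err I)\<^sup>*\<^sup>* (G2, W2) (G', Wb)"
    unfolding weak_ext_def by blast
  from t2 show ?thesis
  proof (cases rule: rtranclp.cases)
    case rtrancl_refl
    then have "ext \<delta> err I G1 W1 (EGamma ch val) G' W'" using e a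
      by (auto elim!: ext.cases intro: ext.intros trans.Alpha[OF alpha_refl])
    then show ?thesis using t1 unfolding weak_ext_def by blast
  next
    case (rtrancl_into_rtrancl y)
    then have "(ext_tau \<delta> err I)\<^sup>*\<^sup>* (G2, W2) (G', W')"
      using ext_tau_alpha[OF _ a] by (meson rtranclp.rtrancl_into_rtrancl)
    then show ?thesis using t1 e unfolding weak_ext_def by blast
  qed
qed

lemma lift: "(ext_tau \<delta> err I)\<^sup>*\<^sup>* p q \<Longrightarrow> (\<forall>ch. \<not> rcv_s T ch) \<Longrightarrow>
  (red_i \<delta> err I)\<^sup>*\<^sup>* (fst p, SPar (snd p) T) (fst q, SPar (snd q) T)"
proof (induction rule: rtranclp_induct)
  case base then show ?case by simp
next
  case (step y z)
  from step.hyps(2) have "red_i \<delta> err I (fst y, SPar (snd y) T) (fst z, SPar (snd z) T)"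
    unfolding ext_tau_def
  proof (cases rule: ext.cases)
    case (Shh c v)
    have "trans \<delta> err I (fst y) T (In c v) T"
      using step.prems by (intro RcvIgn) (simp add: rcv_conf_def)
    then show ?thesis using Shh unfolding red_i_def
      by (intro exI[of _ "Out c v"]) (auto intro: Sync1)
  next
    case TauExt
    then show ?thesis unfolding red_i_def
      by (intro exI[of _ TauA]) (auto intro: TauPar1)
  qed
  then show ?case using step.IH step.prems by (meson rtranclp.rtrancl_into_rtrancl)
qed




lemma weak_tau: "weak_ext \<delta> err I G0 W0 a G Wb \<Longrightarrow> ext_tau \<delta> err I (G, Wb) q \<Longrightarrow> weak_ext \<delta> err I G0 W0 a (fst q) (snd q)"
  unfolding weak_ext_def apply (elim exE conjE)
  subgoal for G1 W1 G2 W2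
    apply (rule exI[of _ G1], rule exI[of _ W1], rule exI[of _ G2], rule exI[of _ W2])
    using rtranclp.rtrancl_into_rtrancl[of "ext_tau \<delta> err I" "(G2, W2)" "(G, Wb)" q] by simp
  done

theorem mainTheorem19:
  fixes \<delta> :: "'a \<Rightarrow> nat" and err :: 'a and I :: "'f \<Rightarrow> 'a list \<Rightarrow> 'a"
    and \<Gamma> \<Gamma>' :: "('ch::infinite, 'a) env"
    and W W' :: "('ch, 'a, 'f) sys"
    and c eureka fail d :: 'ch
    and v arb no u :: 'a and x :: nat
  assumes delta_pos: "\<forall>w. 1 \<le> \<delta> w"
    and closed: "closed_sys W" and guarded: "guarded_s W"
    and wf: "wf_conf \<Gamma> W"
    and eureka_fresh: "eureka \<notin> fc W" and fail_fresh: "fail \<notin> fc W"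
    and eureka_idle: "idle \<Gamma> eureka" and fail_idle: "idle \<Gamma> fail"
    and arb: "\<delta> arb = 1" and no: "\<delta> no = 1"
    and d_ne: "d \<noteq> c" "d \<noteq> eureka" "d \<noteq> fail"
  shows "weak_ext \<delta> err I \<Gamma> W (EGamma c v) \<Gamma>' W' \<longleftrightarrow>
     red_isi \<delta> err I
       (\<Gamma>, SPar W (T_gamma c v eureka fail d arb no u x))
       (\<Gamma>', SPar W' (T_gamma_ok eureka d arb u))"
proof
  let ?T0 = "T_gamma c v eureka fail d arb no u x :: ('ch,'a,'f) sys"
  let ?Tok = "T_gamma_ok eureka d arb u :: ('ch,'a,'f) sys"
  let ?S1 = "S1 v eureka fail d arb no u v :: ('ch,'a,'f) sys"
  assume "weak_ext \<delta> err I \<Gamma> W (EGamma c v) \<Gamma>' W'"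
  then obtain G1 W1 G2 W2 where t1: "(ext_tau \<delta> err I)\<^sup>*\<^sup>* (\<Gamma>, W) (G1, W1)"
    and e: "ext \<delta> err I G1 W1 (EGamma c v) G2 W2"
    and t2: "(ext_tau \<delta> err I)\<^sup>*\<^sup>* (G2, W2) (\<Gamma>', W')"
    unfolding weak_ext_def by blast
  from e have g1: "G1 c = (1, v)" and tW: "trans \<delta> err I G1 W1 Time W2" and g2: "G2 = upd \<delta> err Time G1"
    by (auto elim: ext.cases)
  have r1: "(red_i \<delta> err I)\<^sup>*\<^sup>* (\<Gamma>, SPar W ?T0) (G1, SPar W1 ?T0)"
    using lift[OF t1, of ?T0] by (simp add: T_gamma_def sig2)
  have inner: "trans \<delta> err I (G1(d := (0,u)))
     (SPar (SRcv c x (PSum (PCond (BEq (EVar x) (EVal v)) (PSnd d (EVal arb) PNil) PNil) (PSnd fail (EVal no) PNil)))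
           (SProc (sigmas 2 (PCond (BExp d) (PSnd eureka (EVal arb) PNil) PNil)))) Time
     (SPar (SProc (dsubst x v (PSum (PCond (BEq (EVar x) (EVal v)) (PSnd d (EVal arb) PNil) PNil) (PSnd fail (EVal no) PNil))))
           (SProc (PSig (PCond (BExp d) (PSnd eureka (EVal arb) PNil) PNil))))"
    apply (rule TimePar)
     apply (rule EndRcv) using g1 d_ne apply simp
    apply (simp add: sig2) apply (rule Sleep)
    done
  have T0t: "trans \<delta> err I G1 ?T0 Time ?S1"
    using ResV[OF inner] by (simp add: T_gamma_def S1_def)
  have rs: "red_sigma \<delta> err I (G1, SPar W1 ?T0) (G2, SPar W2 ?S1)"
    unfolding red_sigma_def using TimePar[OF tW T0t] g2 by simp
  have inner2: "trans \<delta> err I (G2(d := (0,u)))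
     (SPar (SProc (PSum (PCond (BEq (EVal v) (EVal v)) (PSnd d (EVal arb) PNil) PNil) (PSnd fail (EVal no) PNil)))
           (SProc (PSig (PCond (BExp d) (PSnd eureka (EVal arb) PNil) PNil)))) TauA
     (SPar (SProc (PSig (PSnd d (EVal arb) PNil)))
           (SProc (PSig (PCond (BExp d) (PSnd eureka (EVal arb) PNil) PNil))))"
    apply (rule TauPar1)
    apply (rule Sum1) apply simp
    apply (rule Then) apply simp
    done
  have S1t: "trans \<delta> err I G2 ?S1 TauA ?Tok"
    using ResV[OF inner2] by (simp add: S1_def T_gamma_ok_def)
  have ri: "red_i \<delta> err I (G2, SPar W2 ?S1) (G2, SPar W2 ?Tok)"
    unfolding red_i_def using TauPar2[OF S1t] by (intro exI[of _ TauA]) simp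
  have r3: "(red_i \<delta> err I)\<^sup>*\<^sup>* (G2, SPar W2 ?Tok) (\<Gamma>', SPar W' ?Tok)"
    using lift[OF t2, of ?Tok] by (simp add: T_gamma_ok_def)
  show "red_isi \<delta> err I (\<Gamma>, SPar W ?T0) (\<Gamma>', SPar W' ?Tok)"
    unfolding red_isi_def using r1 rs ri r3 by (meson converse_rtranclp_into_rtranclp)
next
  let ?T0 = "T_gamma c v eureka fail d arb no u x :: ('ch,'a,'f) sys"
  let ?Tok = "T_gamma_ok eureka d arb u :: ('ch,'a,'f) sys"
  assume "red_isi \<delta> err I (\<Gamma>, SPar W ?T0) (\<Gamma>', SPar W' ?Tok)"
  then obtain C1 C2 where r1: "(red_i \<delta> err I)\<^sup>*\<^sup>* (\<Gamma>, SPar W ?T0) C1"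
    and rs: "red_sigma \<delta> err I C1 C2" and r3: "(red_i \<delta> err I)\<^sup>*\<^sup>* C2 (\<Gamma>', SPar W' ?Tok)"
    unfolding red_isi_def by blast
  define Q1 where "Q1 = (\<lambda>G X. \<exists>Wx. (ext_tau \<delta> err I)\<^sup>*\<^sup>* (\<Gamma>, W) (G, Wx) \<and> alpha Wx X)"
  have Q1tau: "Q1 G Y" if "Q1 G X" "trans \<delta> err I G X TauA Y" for G X Y
  proof -
    from that(1) obtain Wx where "(ext_tau \<delta> err I)\<^sup>*\<^sup>* (\<Gamma>, W) (G, Wx)" "alpha Wx X" unfolding Q1_def by blast
    moreover have "ext_tau \<delta> err I (G, Wx) (G, Y)"
      unfolding ext_tau_def using TauExt[OF trans.Alpha[OF calculation(2) that(2) alpha_refl]] by simp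
    ultimately show ?thesis unfolding Q1_def by (meson rtranclp.rtrancl_into_rtrancl alpha_refl)
  qed
  have Q1out: "Q1 (upd \<delta> err (Out ch val) G) Y" if "Q1 G X" "trans \<delta> err I G X (Out ch val) Y" for G X Y ch val
  proof -
    from that(1) obtain Wx where "(ext_tau \<delta> err I)\<^sup>*\<^sup>* (\<Gamma>, W) (G, Wx)" "alpha Wx X" unfolding Q1_def by blast
    moreover have "ext_tau \<delta> err I (G, Wx) (upd \<delta> err (Out ch val) G, Y)"
      unfolding ext_tau_def using Shh[OF trans.Alpha[OF calculation(2) that(2) alpha_refl]] by simp
    ultimately show ?thesis unfolding Q1_def by (meson rtranclp.rtrancl_into_rtrancl alpha_refl)
  qed
  have i0: "inert_s ?T0" "norcv_s ?T0" by (simp_all add: T_gamma_def sig2)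
  have q0: "Q1 \<Gamma> W" unfolding Q1_def by (blast intro: alpha_refl)
  have "\<exists>G' A' T'. C1 = (G', SPar A' T') \<and> Q1 G' A' \<and> db Some T' = db Some ?T0"
    by (rule phase1[where Q=Q1, OF _ _ i0 r1 refl q0 refl]) (metis Q1tau, metis Q1out)
  then obtain G1 W1 T1 where C1: "C1 = (G1, SPar W1 T1)" and q1: "Q1 G1 W1" and dT1: "db Some T1 = db Some ?T0"
    by blast
  from rs C1 have tt: "trans \<delta> err I G1 (SPar W1 T1) Time (snd C2)" and g2: "fst C2 = upd \<delta> err Time G1"
    unfolding red_sigma_def by auto
  from par_inv[OF tt refl] have "\<exists>W2 T2. snd C2 = SPar W2 T2 \<and> trans \<delta> err I G1 W1 Time W2 \<and> trans \<delta> err I G1 T1 Time T2"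
    by simp
  then obtain W2 T2 where C2: "C2 = (upd \<delta> err Time G1, SPar W2 T2)" and tW: "trans \<delta> err I G1 W1 Time W2"
    and tT: "trans \<delta> err I G1 T1 Time T2"
    using g2 by (metis prod.collapse)
  from q1 obtain Wx where tx: "(ext_tau \<delta> err I)\<^sup>*\<^sup>* (\<Gamma>, W) (G1, Wx)" and ax: "alpha Wx W1"
    unfolding Q1_def by blast
  have tWx: "trans \<delta> err I G1 Wx Time W2" using trans.Alpha[OF ax tW alpha_refl] .
  define Q3 where "Q3 = (\<lambda>w G X. \<exists>Wb. weak_ext \<delta> err I \<Gamma> W (EGamma c w) G Wb \<and> alpha Wb X)"
  have Q3tau: "Q3 w G Y" if "Q3 w G X" "trans \<delta> err I G X TauA Y" for w G X Y
  proof -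
    from that(1) obtain Wb where "weak_ext \<delta> err I \<Gamma> W (EGamma c w) G Wb" "alpha Wb X" unfolding Q3_def by blast
    moreover have "ext_tau \<delta> err I (G, Wb) (G, Y)"
      unfolding ext_tau_def using TauExt[OF trans.Alpha[OF calculation(2) that(2) alpha_refl]] by simp
    ultimately show ?thesis unfolding Q3_def using weak_tau by (metis fst_conv snd_conv alpha_refl)
  qed
  have Q3out: "Q3 w (upd \<delta> err (Out ch val) G) Y" if "Q3 w G X" "trans \<delta> err I G X (Out ch val) Y" for w G X Y ch val
  proof -
    from that(1) obtain Wb where "weak_ext \<delta> err I \<Gamma> W (EGamma c w) G Wb" "alpha Wb X" unfolding Q3_def by blast
    moreover have "ext_tau \<delta> err I (G, Wb) (upd \<delta> err (Out ch val) G, Y)"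
      unfolding ext_tau_def using Shh[OF trans.Alpha[OF calculation(2) that(2) alpha_refl]] by simp
    ultimately show ?thesis unfolding Q3_def using weak_tau by (metis fst_conv snd_conv alpha_refl)
  qed
  have Q3alpha: "Q3 w G Y" if "Q3 w G X" "alpha X Y" for w G X Y
    using that unfolding Q3_def by (meson alpha_trans)
  have P3: "\<And>w. \<not> dead eureka d arb u T2 \<and>
      (Q3 w (upd \<delta> err Time G1) W2 \<longrightarrow> (db Some T2 = db Some ?Tok \<longrightarrow> Q3 w \<Gamma>' W') \<and>
         (db Some T2 = db Some (S1 v eureka fail d arb no u w :: ('ch,'a,'f) sys) \<longrightarrow> w = v \<and> Q3 w \<Gamma>' W'))"
  proof -
    fix w
    have "\<forall>G A T. C2 = (G, SPar A T) \<longrightarrow> \<not> dead eureka d arb u T \<and>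
      (Q3 w G A \<longrightarrow> (db Some T = db Some ?Tok \<longrightarrow> Q3 w \<Gamma>' W') \<and>
         (db Some T = db Some (S1 v eureka fail d arb no u w :: ('ch,'a,'f) sys) \<longrightarrow> w = v \<and> Q3 w \<Gamma>' W'))"
      by (rule phase3[where Q="Q3 w", OF d_ne no _ _ _ r3 refl]) (metis Q3tau, metis Q3out, metis Q3alpha)
    then show "?thesis w" using C2 by blast
  qed
  from s0_time[OF d_ne tT refl dT1]
  show "weak_ext \<delta> err I \<Gamma> W (EGamma c v) \<Gamma>' W'"
  proof
    assume "\<exists>w. G1 c = (1, w) \<and> db Some T2 = db Some (S1 v eureka fail d arb no u w :: ('ch,'a,'f) sys)"
    then obtain w where g1: "G1 c = (1, w)" and s1: "db Some T2 = db Some (S1 v eureka fail d arb no u w :: ('ch,'a,'f) sys)"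
      by blast
    have "ext \<delta> err I G1 Wx (EGamma c w) (upd \<delta> err Time G1) W2" using Deliver[OF g1 tWx] .
    then have "weak_ext \<delta> err I \<Gamma> W (EGamma c w) (upd \<delta> err Time G1) W2"
      using tx unfolding weak_ext_def by blast
    then have "Q3 w (upd \<delta> err Time G1) W2" unfolding Q3_def by (blast intro: alpha_refl)
    with P3[of w] s1 have "w = v" "Q3 w \<Gamma>' W'" by auto
    then obtain Wb where w1: "weak_ext \<delta> err I \<Gamma> W (EGamma c v) \<Gamma>' Wb" and a1: "alpha Wb W'" unfolding Q3_def by blast
    show ?thesis using weak_alpha[OF w1 a1] .
  next
    assume "1 < fst (G1 c) \<and> dead eureka d arb u T2"
    with P3[of v] show ?thesis by blast
  qed
qed


end
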